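(* Fix a centrally symmetric polygon $Q$ and the map $\eta^B$ from $B_n$ to centrally symmetric triangulations of $Q$ as described below. Then the fibers of $\eta^B$ are exactly the congruence classes of a lattice congruence of the weak order on $B_n$.
   Context: $B_n$ is the group of signed permutations: permutations $x$ of $\pm[n]=\{\pm1,\dots,\pm n\}$ with $x(-i)=-x(i)$; the full notation of $x$ is the sequence $x_{-n},\dots,x_{-1},x_1,\dots,x_n$ with $x_i=x(i)$. Its Coxeter generators are $s_0=(-1\ 1)$ and $s_i=(i\ i{+}1)(-i{-}1\ {-i})$ for $i\in[n-1]$. The weak order is $v\le w$ iff $I(v)\subseteq I(w)$, where $I(w)$ is the set of reflections $t$ with $\ell(tw)<\ell(w)$; it is a lattice. Let $Q$ be a convex $(2n+2)$-gon in $\mathbb R^2$ with vertices $v_i$, $i\in\{\pm1,\dots,\pm(n+1)\}$, symmetric under $v\mapsto -v$ with $v_{-i}=-v_i$, whose $x$-coordinates strictly increase in the order $-n-1<\dots<-1<1<\dots<n+1$, with $v_{\pm(n+1)}$ on the $x$-axis; call $i$ up if $v_i$ has positive $y$-coordinate and down otherwise (so $i$ is up iff $-i$ is down). For a signed permutation $x$ list its full notation as $y_1,\dots,y_{2n}$; define paths $\lambda_0,\dots,\lambda_{2n}$ from $v_{-n-1}$ to $v_{n+1}$ visiting vertices in increasing order of index: $\lambda_0$ visits $v_{-n-1}$, all down vertices, and $v_{n+1}$; $\lambda_k$ is $\lambda_{k-1}$ with $v_{y_k}$ deleted if $y_k$ is down and added if $y_k$ is up. $\eta^B(x)$ is the set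 of diagonals (segments between non-adjacent vertices) of $Q$ appearing as edges of some $\lambda_k$; it is a centrally symmetric triangulation of $Q$. *)

theory Defs
  imports "HOL-Analysis.Analysis" "HOL-Combinatorics.Permutations"
begin

definition pm_set :: "nat \<Rightarrow> int set" where
  "pm_set n = {i. 1 \<le> \<bar>i\<bar> \<and> \<bar>i\<bar> \<le> int n}"

definition signed_perms :: "nat \<Rightarrow> (int \<Rightarrow> int) set" where
  "signed_perms n = {x. x permutes pm_set n \<and> (\<forall>i. x (- i) = - x i)}"

definition cox_gen :: "nat \<Rightarrow> int \<Rightarrow> int" where
  "cox_gen i = (if i = 0 then (\<lambda>k. if k = 1 then -1 else if k = -1 then 1 else k)
     else (\<lambda>k. if k = int i then int i + 1 else if k = int i + 1 then int i
           else if k = - int i then - int i - 1 else if k = - int i - 1 then - int i else k))"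

definition cox_len :: "nat \<Rightarrow> (int \<Rightarrow> int) \<Rightarrow> nat" where
  "cox_len n w = (LEAST k. \<exists>ws. length ws = k \<and> set ws \<subseteq> {..<n} \<and>
                      foldr (\<circ>) (map cox_gen ws) id = w)"

definition reflections :: "nat \<Rightarrow> (int \<Rightarrow> int) set" where
  "reflections n = {w \<circ> cox_gen i \<circ> inv w | w i. w \<in> signed_perms n \<and> i < n}"

definition inv_set :: "nat \<Rightarrow> (int \<Rightarrow> int) \<Rightarrow> (int \<Rightarrow> int) set" where
  "inv_set n w = {t \<in> reflections n. cox_len n (t \<circ> w) < cox_len n w}"

definition weak_le :: "nat \<Rightarrow> (int \<Rightarrow> int) \<Rightarrow> (int \<Rightarrow> int) \<Rightarrow> bool" where
  "weak_le n v w \<longleftrightarrow> inv_set n v \<subseteq> inv_set n w"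

definition is_meet :: "'a set \<Rightarrow> ('a \<Rightarrow> 'a \<Rightarrow> bool) \<Rightarrow> 'a \<Rightarrow> 'a \<Rightarrow> 'a \<Rightarrow> bool" where
  "is_meet A le x y m \<longleftrightarrow> m \<in> A \<and> le m x \<and> le m y \<and>
     (\<forall>z\<in>A. le z x \<and> le z y \<longrightarrow> le z m)"

definition is_join :: "'a set \<Rightarrow> ('a \<Rightarrow> 'a \<Rightarrow> bool) \<Rightarrow> 'a \<Rightarrow> 'a \<Rightarrow> 'a \<Rightarrow> bool" where
  "is_join A le x y m \<longleftrightarrow> m \<in> A \<and> le x m \<and> le y m \<and>
     (\<forall>z\<in>A. le x z \<and> le y z \<longrightarrow> le m z)"

definition lattice_congruence :: "'a set \<Rightarrow> ('a \<Rightarrow> 'a \<Rightarrow> bool) \<Rightarrow> ('a \<times> 'a) set \<Rightarrow> bool" where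
  "lattice_congruence A le \<Theta> \<longleftrightarrow> equiv A \<Theta> \<and>
     (\<forall>x y z m1 m2. (x, y) \<in> \<Theta> \<and> z \<in> A \<and> is_meet A le x z m1 \<and> is_meet A le y z m2
        \<longrightarrow> (m1, m2) \<in> \<Theta>) \<and>
     (\<forall>x y z m1 m2. (x, y) \<in> \<Theta> \<and> z \<in> A \<and> is_join A le x z m1 \<and> is_join A le y z m2
        \<longrightarrow> (m1, m2) \<in> \<Theta>)"

definition cross3 :: "real \<times> real \<Rightarrow> real \<times> real \<Rightarrow> real \<times> real \<Rightarrow> real" where
  "cross3 a b c = (fst b - fst a) * (snd c - snd a) - (snd b - snd a) * (fst c - fst a)"

text \<open>Vertices of Q are v i for i in \<plusminus>[n+1].\<close>
definition sym_polygon :: "nat \<Rightarrow> (int \<Rightarrow> real \<times> real) \<Rightarrow> bool" where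
  "sym_polygon n v \<longleftrightarrow>
     (\<forall>i\<in>pm_set (Suc n). v i \<notin> convex hull (v ` (pm_set (Suc n) - {i}))) \<and>
     (\<forall>i\<in>pm_set (Suc n). v (- i) = - v i) \<and>
     (\<forall>i\<in>pm_set (Suc n). \<forall>j\<in>pm_set (Suc n). i < j \<longrightarrow> fst (v i) < fst (v j)) \<and>
     snd (v (int n + 1)) = 0"

definition poly_edge :: "nat \<Rightarrow> (int \<Rightarrow> real \<times> real) \<Rightarrow> int \<Rightarrow> int \<Rightarrow> bool" where
  "poly_edge n v i j \<longleftrightarrow> i \<in> pm_set (Suc n) \<and> j \<in> pm_set (Suc n) \<and> i \<noteq> j \<and>
     ((\<forall>k \<in> pm_set (Suc n) - {i, j}. cross3 (v i) (v j) (v k) > 0) \<or>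
      (\<forall>k \<in> pm_set (Suc n) - {i, j}. cross3 (v i) (v j) (v k) < 0))"

definition is_diagonal :: "nat \<Rightarrow> (int \<Rightarrow> real \<times> real) \<Rightarrow> int set \<Rightarrow> bool" where
  "is_diagonal n v d \<longleftrightarrow> (\<exists>i j. d = {i, j} \<and> i \<in> pm_set (Suc n) \<and> j \<in> pm_set (Suc n) \<and>
      i \<noteq> j \<and> \<not> poly_edge n v i j)"

definition is_up :: "(int \<Rightarrow> real \<times> real) \<Rightarrow> int \<Rightarrow> bool" where
  "is_up v i \<longleftrightarrow> snd (v i) > 0"

text \<open>Full notation x_{-n},...,x_{-1},x_1,...,x_n as the list y_1..y_{2n} (0-indexed).\<close>
definition full_notation :: "nat \<Rightarrow> (int \<Rightarrow> int) \<Rightarrow> int list" where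
  "full_notation n x = map x ([- int n .. -1] @ [1 .. int n])"

text \<open>A path visiting vertices in increasing index order is given by its vertex set.\<close>
primrec lam_path :: "nat \<Rightarrow> (int \<Rightarrow> real \<times> real) \<Rightarrow> (int \<Rightarrow> int) \<Rightarrow> nat \<Rightarrow> int set" where
  "lam_path n v x 0 = {- int n - 1, int n + 1} \<union> {i \<in> pm_set n. \<not> is_up v i}"
| "lam_path n v x (Suc k) =
     (let y = full_notation n x ! k in
      if is_up v y then insert y (lam_path n v x k) else lam_path n v x k - {y})"

definition path_edges :: "int set \<Rightarrow> int set set" where
  "path_edges S = {{i, j} | i j. i \<in> S \<and> j \<in> S \<and> i < j \<and> (\<forall>k\<in>S. \<not> (i < k \<and> k < j))}"

definition etaB :: "nat \<Rightarrow> (int \<Rightarrow> real \<times> real) \<Rightarrow> (int \<Rightarrow> int) \<Rightarrow> int set set" where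
  "etaB n v x = {d. is_diagonal n v d \<and> (\<exists>k \<le> 2 * n. d \<in> path_edges (lam_path n v x k))}"

end

theory Submission
  imports Defs
begin


lemma pm_set_iff: "i \<in> pm_set n \<longleftrightarrow> i \<noteq> 0 \<and> - int n \<le> i \<and> i \<le> int n"
  by (auto simp: pm_set_def)

lemma finite_pm_set: "finite (pm_set n)"
proof -
  have "pm_set n \<subseteq> {- int n..int n}" by (auto simp: pm_set_iff)
  then show ?thesis by (rule finite_subset) simp
qed

lemma invol_permutes:
  assumes "\<And>k. f (f k) = k" and "\<And>k. k \<notin> S \<Longrightarrow> f k = k"
  shows "f permutes S"
  unfolding permutes_def
proof (intro conjI allI impI)
  fix y show "\<exists>!x. f x = y"
    by (rule ex1I[of _ "f y"]) (use assms in metis)+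
qed (use assms in auto)

context fixes n :: nat and x :: "int \<Rightarrow> int"
  assumes sp: "x \<in> signed_perms n"
begin

lemma sp_perm: "x permutes pm_set n" using sp by (simp add: signed_perms_def)
lemma sp_odd: "x (- i) = - x i" using sp by (simp add: signed_perms_def)
lemma sp_zero: "x 0 = 0" using sp_odd[of 0] by simp
lemma sp_in: "x i \<in> pm_set n \<longleftrightarrow> i \<in> pm_set n" using sp_perm by (rule permutes_in_image)
lemma sp_out: "i \<notin> pm_set n \<Longrightarrow> x i = i" using sp_perm by (rule permutes_not_in)
lemma sp_inv1: "inv x (x i) = i" using sp_perm by (rule permutes_inverses)
lemma sp_inv2: "x (inv x i) = i" using sp_perm by (rule permutes_inverses)
lemma sp_inj: "x i = x j \<longleftrightarrow> i = j" by (metis sp_inv1)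
lemma sp_inv_sp: "inv x \<in> signed_perms n"
proof -
  have "inv x (- i) = - inv x i" for i
    by (metis sp_inv1 sp_inv2 sp_odd)
  then show ?thesis using permutes_inv[OF sp_perm] by (simp add: signed_perms_def)
qed

end

lemma sp_comp: "x \<in> signed_perms n \<Longrightarrow> y \<in> signed_perms n \<Longrightarrow> x \<circ> y \<in> signed_perms n"
  by (simp add: signed_perms_def permutes_compose)

lemma sp_id: "id \<in> signed_perms n"
  by (simp add: signed_perms_def permutes_id)

lemma cox_gen_invol: "cox_gen i (cox_gen i k) = k"
  by (auto simp: cox_gen_def)

lemma cox_gen_sp: "i < n \<Longrightarrow> cox_gen i \<in> signed_perms n"
  unfolding signed_perms_def
  by (auto intro!: invol_permutes cox_gen_invol simp: cox_gen_def pm_set_iff)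

lemma inv_cox_gen: "inv (cox_gen i) = cox_gen i"
  by (rule inv_unique_comp) (auto simp: fun_eq_iff cox_gen_invol)

definition tau :: "int \<Rightarrow> int \<Rightarrow> int \<Rightarrow> int" where
  "tau a b k = (if k = a then b else if k = b then a else if k = - a then - b
     else if k = - b then - a else k)"

lemma tau_invol: "a \<noteq> 0 \<Longrightarrow> b \<noteq> 0 \<Longrightarrow> tau a b (tau a b k) = k"
  by (auto simp: tau_def)

lemma tau_sp: "a \<in> pm_set n \<Longrightarrow> b \<in> pm_set n \<Longrightarrow> tau a b \<in> signed_perms n"
  unfolding signed_perms_def
  by (auto intro!: invol_permutes tau_invol simp: tau_def pm_set_iff)

lemma tau_comm: "tau a b = tau b a"
  by (auto simp: tau_def fun_eq_iff)



section \<open>Inversion sets\<close>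

definition Inv :: "nat \<Rightarrow> (int \<Rightarrow> int) \<Rightarrow> (int \<times> int) set" where
  "Inv n x = {(a, b). a \<in> pm_set n \<and> b \<in> pm_set n \<and> a < b \<and> inv x b < inv x a}"

definition swp :: "nat \<Rightarrow> int \<Rightarrow> int \<Rightarrow> bool" where
  "swp i p q \<longleftrightarrow> (i = 0 \<and> p = -1 \<and> q = 1) \<or>
     (i > 0 \<and> ((p = int i \<and> q = int i + 1) \<or> (p = - int i - 1 \<and> q = - int i)))"

lemma cox_gen_order:
  assumes "p \<noteq> 0" "q \<noteq> 0" "p < q"
  shows "cox_gen i p < cox_gen i q \<longleftrightarrow> \<not> swp i p q"
  using assms by (auto simp: cox_gen_def swp_def)

definition Oset :: "nat \<Rightarrow> (int \<Rightarrow> int) \<Rightarrow> nat \<Rightarrow> (int \<times> int) set" where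
  "Oset n x i = {(a, b). a \<in> pm_set n \<and> b \<in> pm_set n \<and> a < b \<and>
      (swp i (inv x a) (inv x b) \<or> swp i (inv x b) (inv x a))}"

lemma inv_comp_gen:
  assumes "x \<in> signed_perms n" "i < n"
  shows "inv (x \<circ> cox_gen i) = cox_gen i \<circ> inv x"
proof -
  have "bij x" using assms(1) permutes_bij sp_perm by blast
  moreover have "bij (cox_gen i)" using cox_gen_sp[OF assms(2)] permutes_bij sp_perm by blast
  ultimately show ?thesis by (simp add: o_inv_distrib inv_cox_gen)
qed

lemma Inv_swap:
  assumes x: "x \<in> signed_perms n" and i: "i < n"
  shows "(a, b) \<in> Inv n (x \<circ> cox_gen i) \<longleftrightarrow> ((a, b) \<in> Inv n x) \<noteq> ((a, b) \<in> Oset n x i)"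
proof (cases "a \<in> pm_set n \<and> b \<in> pm_set n \<and> a < b")
  case True
  define P where "P = inv x a"
  define Q where "Q = inv x b"
  have P0: "P \<noteq> 0" using True sp_in[OF sp_inv_sp[OF x], of a] by (auto simp: P_def pm_set_iff)
  have Q0: "Q \<noteq> 0" using True sp_in[OF sp_inv_sp[OF x], of b] by (auto simp: Q_def pm_set_iff)
  have PQ: "P \<noteq> Q" using True by (metis P_def Q_def sp_inv2[OF x] less_irrefl)
  have "(a, b) \<in> Inv n (x \<circ> cox_gen i) \<longleftrightarrow> cox_gen i Q < cox_gen i P"
    using True by (simp add: Inv_def inv_comp_gen[OF x i] P_def Q_def)
  also have "\<dots> \<longleftrightarrow> (Q < P) \<noteq> (swp i P Q \<or> swp i Q P)"
  proof (cases "Q < P")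
    case True
    then show ?thesis using cox_gen_order[OF Q0 P0 True, of i] by (auto simp: swp_def)
  next
    case False
    then have "P < Q" using PQ by simp
    have ne: "cox_gen i P \<noteq> cox_gen i Q" using PQ by (metis cox_gen_invol)
    have "\<not> swp i Q P" using \<open>P < Q\<close> by (auto simp: swp_def)
    then show ?thesis using cox_gen_order[OF P0 Q0 \<open>P < Q\<close>, of i] False ne
      by auto
  qed
  finally show ?thesis using True by (simp add: Inv_def Oset_def P_def Q_def)
qed (auto simp: Inv_def Oset_def)

definition desc :: "(int \<Rightarrow> int) \<Rightarrow> nat \<Rightarrow> bool" where
  "desc x i \<longleftrightarrow> (if i = 0 then x 1 < 0 else x (int i + 1) < x (int i))"


lemma swp_in: "swp i p q \<Longrightarrow> i < n \<Longrightarrow> p \<in> pm_set n \<and> q \<in> pm_set n"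
  by (auto simp: swp_def pm_set_iff)

lemma Oset_mem:
  assumes x: "x \<in> signed_perms n" and i: "i < n"
  shows "(a, b) \<in> Oset n x i \<longleftrightarrow> a < b \<and>
     (\<exists>p q. swp i p q \<and> ((a = x p \<and> b = x q) \<or> (a = x q \<and> b = x p)))"
proof
  assume "(a, b) \<in> Oset n x i"
  then have h: "a < b" "swp i (inv x a) (inv x b) \<or> swp i (inv x b) (inv x a)"
    unfolding Oset_def by simp_all
  have e: "a = x (inv x a)" "b = x (inv x b)" using sp_inv2[OF x] by auto
  from h(2) show "a < b \<and> (\<exists>p q. swp i p q \<and> ((a = x p \<and> b = x q) \<or> (a = x q \<and> b = x p)))"
  proof
    assume "swp i (inv x a) (inv x b)"
    then show ?thesis using h(1) e by blast
  next
    assume "swp i (inv x b) (inv x a)"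
    then show ?thesis using h(1) e by blast
  qed
next
  assume "a < b \<and> (\<exists>p q. swp i p q \<and> ((a = x p \<and> b = x q) \<or> (a = x q \<and> b = x p)))"
  then obtain p q where pq: "a < b" "swp i p q" "(a = x p \<and> b = x q) \<or> (a = x q \<and> b = x p)" by blast
  have pqV: "p \<in> pm_set n" "q \<in> pm_set n" using swp_in[OF pq(2) i] by auto
  have ip: "inv x (x p) = p" "inv x (x q) = q" using sp_inv1[OF x] by auto
  have V: "x p \<in> pm_set n" "x q \<in> pm_set n" using pqV sp_in[OF x] by auto
  from pq(3) show "(a, b) \<in> Oset n x i"
  proof
    assume "a = x p \<and> b = x q"
    then show ?thesis unfolding Oset_def using pq(1,2) ip V by simp
  next
    assume "a = x q \<and> b = x p"
    then show ?thesis unfolding Oset_def using pq(1,2) ip V by (simp add: disj_commute)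
  qed
qed

lemma sp_nz: assumes x: "x \<in> signed_perms n" and "i \<in> pm_set n" shows "x i \<noteq> 0"
proof -
  have "x i \<in> pm_set n" using assms sp_in[OF x] by blast
  then show ?thesis unfolding pm_set_iff by blast
qed

lemma sp_facts:
  assumes x: "x \<in> signed_perms n" and i: "0 < i" "i < n"
  shows "x (- int i - 1) = - x (int i + 1)" "x (- int i) = - x (int i)"
    "x (int i) \<noteq> x (int i + 1)" "x (int i) \<noteq> - x (int i + 1)"
    "x (int i) \<noteq> 0" "x (int i + 1) \<noteq> 0"
proof -
  show 1: "x (- int i - 1) = - x (int i + 1)" using sp_odd[OF x, of "int i + 1"] by simp
  show "x (- int i) = - x (int i)" using sp_odd[OF x] by simp
  show "x (int i) \<noteq> x (int i + 1)" using sp_inj[OF x] by simp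
  show "x (int i) \<noteq> - x (int i + 1)" using sp_inj[OF x, of "int i" "- int i - 1"] 1 by simp
  have "int i \<in> pm_set n" "int i + 1 \<in> pm_set n" using i by (auto simp: pm_set_iff)
  then show "x (int i) \<noteq> 0" "x (int i + 1) \<noteq> 0" using sp_nz[OF x] by auto
qed

lemma sp_facts0:
  assumes x: "x \<in> signed_perms n" and i: "0 < n"
  shows "x (- 1) = - x 1" "x 1 \<noteq> 0"
proof -
  show "x (- 1) = - x 1" using sp_odd[OF x] by simp
  have "1 \<in> pm_set n" using i by (auto simp: pm_set_iff)
  then show "x 1 \<noteq> 0" using sp_nz[OF x] by auto
qed

lemma Oset_Inv:
  assumes x: "x \<in> signed_perms n" and i: "i < n" and ab: "(a, b) \<in> Oset n x i"
  shows "(a, b) \<in> Inv n x \<longleftrightarrow> desc x i"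
proof -
  obtain p q where pq: "a < b" "swp i p q" "(a = x p \<and> b = x q) \<or> (a = x q \<and> b = x p)"
    using ab Oset_mem[OF x i] by blast
  have ab': "a \<in> pm_set n" "b \<in> pm_set n" using ab by (auto simp: Oset_def)
  have II: "(a, b) \<in> Inv n x \<longleftrightarrow> inv x b < inv x a" using ab' pq(1) by (simp add: Inv_def)
  have ip: "inv x (x p) = p" "inv x (x q) = q" using sp_inv1[OF x] by auto
  have pq_lt: "p < q" using pq(2) by (auto simp: swp_def)
  have key: "desc x i \<longleftrightarrow> x q < x p"
  proof (cases "i = 0")
    case True
    then have "p = -1" "q = 1" using pq(2) by (auto simp: swp_def)
    then show ?thesis using sp_facts0[OF x] i True by (auto simp: desc_def)
  next
    case False
    then have "(p = int i \<and> q = int i + 1) \<or> (p = - int i - 1 \<and> q = - int i)"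
      using pq(2) by (auto simp: swp_def)
    then show ?thesis using sp_facts[OF x _ i] False by (auto simp: desc_def)
  qed
  from pq(3) show ?thesis
  proof
    assume h: "a = x p \<and> b = x q"
    then have "inv x a = p" "inv x b = q" using ip by auto
    then show ?thesis using II key h pq_lt pq(1) by auto
  next
    assume h: "a = x q \<and> b = x p"
    then have "inv x a = q" "inv x b = p" using ip by auto
    then show ?thesis using II key h pq_lt pq(1) by auto
  qed
qed

definition pip :: "(int \<Rightarrow> int) \<Rightarrow> nat \<Rightarrow> int \<times> int" where
  "pip x i = (if i = 0 then (- \<bar>x 1\<bar>, \<bar>x 1\<bar>)
     else if x i + x (int i + 1) > 0 then (min (x i) (x (int i + 1)), max (x i) (x (int i + 1)))
     else (- max (x i) (x (int i + 1)), - min (x i) (x (int i + 1))))"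

lemma Oset_cases:
  assumes x: "x \<in> signed_perms n" and i: "i < n" and ab: "(a, b) \<in> Oset n x i"
  shows "(i = 0 \<and> a = - \<bar>x 1\<bar> \<and> b = \<bar>x 1\<bar>) \<or>
    (i > 0 \<and> ((a = min (x i) (x (int i + 1)) \<and> b = max (x i) (x (int i + 1))) \<or>
               (a = - max (x i) (x (int i + 1)) \<and> b = - min (x i) (x (int i + 1)))))"
proof -
  obtain p q where pq: "a < b" "swp i p q" "(a = x p \<and> b = x q) \<or> (a = x q \<and> b = x p)"
    using ab Oset_mem[OF x i] by blast
  show ?thesis
  proof (cases "i = 0")
    case True
    then have "p = -1" "q = 1" using pq(2) by (auto simp: swp_def)
    then have "(a = - x 1 \<and> b = x 1) \<or> (a = x 1 \<and> b = - x 1)"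
      using pq(3) sp_facts0[OF x] i True by auto
    then show ?thesis using pq(1) True by auto
  next
    case False
    then have "(p = int i \<and> q = int i + 1) \<or> (p = - int i - 1 \<and> q = - int i)"
      using pq(2) by (auto simp: swp_def)
    then have "(a = x i \<and> b = x (int i + 1)) \<or> (a = x (int i + 1) \<and> b = x i) \<or>
       (a = - x (int i + 1) \<and> b = - x i) \<or> (a = - x i \<and> b = - x (int i + 1))"
      using pq(3) sp_facts[OF x _ i] False by auto
    then show ?thesis using pq(1) False by (auto simp: min_def max_def)
  qed
qed

lemma Oset_memI:
  assumes x: "x \<in> signed_perms n" and i: "i < n" and s: "swp i p q"
  shows "x p < x q \<Longrightarrow> (x p, x q) \<in> Oset n x i" and "x q < x p \<Longrightarrow> (x q, x p) \<in> Oset n x i"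
proof -
  assume "x p < x q"
  then show "(x p, x q) \<in> Oset n x i" using Oset_mem[OF x i, of "x p" "x q"] s by blast
next
  assume "x q < x p"
  then show "(x q, x p) \<in> Oset n x i" using Oset_mem[OF x i, of "x q" "x p"] s by blast
qed

lemma Oset_elems:
  assumes x: "x \<in> signed_perms n" and i: "i < n"
  shows "i = 0 \<Longrightarrow> (- \<bar>x 1\<bar>, \<bar>x 1\<bar>) \<in> Oset n x i"
    and "i > 0 \<Longrightarrow> (min (x i) (x (int i + 1)), max (x i) (x (int i + 1))) \<in> Oset n x i"
    and "i > 0 \<Longrightarrow> (- max (x i) (x (int i + 1)), - min (x i) (x (int i + 1))) \<in> Oset n x i"
proof -
  assume i0: "i = 0"
  have s: "swp i (-1) 1" using i0 by (simp add: swp_def)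
  have f: "x (- 1) = - x 1" "x 1 \<noteq> 0" using sp_facts0[OF x] i i0 by auto
  show "(- \<bar>x 1\<bar>, \<bar>x 1\<bar>) \<in> Oset n x i"
  proof (cases "x 1 < 0")
    case True
    then have "x 1 < x (-1)" using f by simp
    from Oset_memI(2)[OF x i s this] show ?thesis using f True by simp
  next
    case False
    then have "x (-1) < x 1" using f by simp
    from Oset_memI(1)[OF x i s this] show ?thesis using f False by simp
  qed
next
  assume i0: "i > 0"
  have s: "swp i (int i) (int i + 1)" "swp i (- int i - 1) (- int i)" using i0 by (auto simp: swp_def)
  have f: "x (- int i - 1) = - x (int i + 1)" "x (- int i) = - x (int i)"
    "x (int i) \<noteq> x (int i + 1)"
    using sp_facts[OF x i0 i] by auto
  show "(min (x i) (x (int i + 1)), max (x i) (x (int i + 1))) \<in> Oset n x i"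
  proof (cases "x i < x (int i + 1)")
    case True
    from Oset_memI(1)[OF x i s(1) this] show ?thesis using True by simp
  next
    case False
    then have "x (int i + 1) < x i" using f by simp
    from Oset_memI(2)[OF x i s(1) this] show ?thesis using False by simp
  qed
  show "(- max (x i) (x (int i + 1)), - min (x i) (x (int i + 1))) \<in> Oset n x i"
  proof (cases "x i < x (int i + 1)")
    case True
    then have "x (- int i - 1) < x (- int i)" using f by simp
    from Oset_memI(1)[OF x i s(2) this] show ?thesis using True f by simp
  next
    case False
    then have "x (- int i) < x (- int i - 1)" using f by simp
    from Oset_memI(2)[OF x i s(2) this] show ?thesis using False f by simp
  qed
qed

lemma Oset_pos:
  assumes x: "x \<in> signed_perms n" and i: "i < n"
  shows "Oset n x i \<inter> {(a, b). 0 \<le> a + b} = {pip x i}"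
proof (intro set_eqI iffI)
  fix ab assume h: "ab \<in> Oset n x i \<inter> {(a, b). 0 \<le> a + b}"
  obtain a b where ab: "ab = (a, b)" by fastforce
  have c: "(i = 0 \<and> a = - \<bar>x 1\<bar> \<and> b = \<bar>x 1\<bar>) \<or>
    (i > 0 \<and> ((a = min (x i) (x (int i + 1)) \<and> b = max (x i) (x (int i + 1))) \<or>
               (a = - max (x i) (x (int i + 1)) \<and> b = - min (x i) (x (int i + 1)))))"
    using Oset_cases[OF x i] h ab by blast
  have s: "0 \<le> a + b" using h ab by blast
  have "i > 0 \<Longrightarrow> x (int i) \<noteq> - x (int i + 1)" using sp_facts[OF x _ i] by blast
  then show "ab \<in> {pip x i}" using c s ab by (auto simp: pip_def min_def max_def)
next
  fix ab assume "ab \<in> {pip x i}"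
  then have ab: "ab = pip x i" by simp
  show "ab \<in> Oset n x i \<inter> {(a, b). 0 \<le> a + b}"
  proof (cases "i = 0")
    case True
    then show ?thesis using ab Oset_elems(1)[OF x i] by (simp add: pip_def)
  next
    case False
    then show ?thesis using ab Oset_elems(2,3)[OF x i] by (auto simp: pip_def min_def max_def)
  qed
qed


definition Lc :: "nat \<Rightarrow> (int \<Rightarrow> int) \<Rightarrow> nat" where
  "Lc n x = card (Inv n x \<inter> {(a, b). 0 \<le> a + b})"

lemma Inv_sub: "Inv n x \<subseteq> pm_set n \<times> pm_set n"
  by (auto simp: Inv_def)

lemma finite_Inv: "finite (Inv n x)"
  using finite_subset[OF Inv_sub] finite_pm_set by blast

lemma Inv_id: "Inv n id = {}"
  by (auto simp: Inv_def)

lemma Lc_id: "Lc n id = 0"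
  by (simp add: Lc_def Inv_id)

lemma Lc_swap:
  assumes x: "x \<in> signed_perms n" and i: "i < n"
  shows "Lc n (x \<circ> cox_gen i) = (if desc x i then Lc n x - 1 else Lc n x + 1)"
    and "desc x i \<Longrightarrow> 1 \<le> Lc n x"
proof -
  define P where "P = {(a::int, b::int). 0 \<le> a + b}"
  define S where "S = Inv n x \<inter> P"
  have fin: "finite S" using finite_Inv by (simp add: S_def)
  have OP: "Oset n x i \<inter> P = {pip x i}" using Oset_pos[OF x i] by (simp add: P_def)
  have pipO: "pip x i \<in> Oset n x i" using OP by blast
  have pipP: "pip x i \<in> P" using OP by blast
  have S': "Inv n (x \<circ> cox_gen i) \<inter> P = (S - {pip x i}) \<union> ({pip x i} - S)"
  proof (intro set_eqI)
    fix ab :: "int \<times> int"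
    obtain a b where ab: "ab = (a, b)" by fastforce
    have "(a, b) \<in> P \<Longrightarrow> (a, b) \<in> Oset n x i \<longleftrightarrow> (a, b) = pip x i" using OP by blast
    then show "ab \<in> Inv n (x \<circ> cox_gen i) \<inter> P \<longleftrightarrow> ab \<in> (S - {pip x i}) \<union> ({pip x i} - S)"
      unfolding ab S_def using Inv_swap[OF x i, of a b] pipP by auto
  qed
  have Oi: "pip x i \<in> Inv n x \<longleftrightarrow> desc x i" using Oset_Inv[OF x i] pipO by (cases "pip x i") auto
  show "Lc n (x \<circ> cox_gen i) = (if desc x i then Lc n x - 1 else Lc n x + 1)"
  proof (cases "desc x i")
    case True
    then have "pip x i \<in> S" using Oi pipP by (simp add: S_def)
    then have "Inv n (x \<circ> cox_gen i) \<inter> P = S - {pip x i}" using S' by auto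
    then show ?thesis using True \<open>pip x i \<in> S\<close> fin
      by (simp add: Lc_def P_def[symmetric] S_def[symmetric])
  next
    case False
    then have "pip x i \<notin> S" using Oi by (simp add: S_def)
    then have "Inv n (x \<circ> cox_gen i) \<inter> P = insert (pip x i) S" using S' by auto
    then show ?thesis using False \<open>pip x i \<notin> S\<close> fin
      by (simp add: Lc_def P_def[symmetric] S_def[symmetric])
  qed
  show "desc x i \<Longrightarrow> 1 \<le> Lc n x"
  proof -
    assume "desc x i"
    then have "pip x i \<in> S" using Oi pipP by (simp add: S_def)
    then have "S \<noteq> {}" by auto
    then show ?thesis using fin by (simp add: Lc_def P_def[symmetric] S_def[symmetric] Suc_le_eq card_gt_0_iff)
  qed
qed

lemma no_desc_id:
  assumes x: "x \<in> signed_perms n" and nd: "\<And>i. i < n \<Longrightarrow> \<not> desc x i"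
  shows "x = id"
proof -
  have lo: "int j \<le> x (int j)" if "1 \<le> j" "j \<le> n" for j :: nat
    using that
  proof (induction j)
    case 0 then show ?case by simp
  next
    case (Suc j)
    show ?case
    proof (cases "j = 0")
      case True
      have "\<not> x 1 < 0" using nd[of 0] Suc.prems by (simp add: desc_def)
      moreover have "x 1 \<noteq> 0" using sp_facts0[OF x] Suc.prems by simp
      ultimately show ?thesis using True by simp
    next
      case False
      have "\<not> x (int j + 1) < x (int j)" using nd[of j] Suc.prems False by (simp add: desc_def)
      moreover have "x (int j) \<noteq> x (int j + 1)" using sp_inj[OF x] by simp
      moreover have e: "int (Suc j) = int j + 1" by simp
      ultimately show ?thesis using Suc False unfolding e by linarith
    qed
  qed
  have hi: "x (int j) \<le> int j" if "1 \<le> j" "j \<le> n" for j :: nat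
  proof -
    have "\<forall>j. 1 \<le> j \<longrightarrow> j \<le> n \<longrightarrow> n - j = m \<longrightarrow> x (int j) \<le> int j" for m
    proof (induction m)
      case 0
      show ?case
      proof (intro allI impI)
        fix j assume "1 \<le> j" "j \<le> n" "n - j = 0"
        then have "j = n" by simp
        have "int j \<in> pm_set n" using \<open>1 \<le> j\<close> \<open>j \<le> n\<close> by (simp add: pm_set_iff)
        then have "x (int j) \<in> pm_set n" using sp_in[OF x] by blast
        then show "x (int j) \<le> int j" using \<open>j = n\<close> unfolding pm_set_iff by simp
      qed
    next
      case (Suc m)
      show ?case
      proof (intro allI impI)
        fix j assume j: "1 \<le> j" "j \<le> n" "n - j = Suc m"
        then have "x (int (Suc j)) \<le> int (Suc j)" using Suc.IH[rule_format, of "Suc j"] by linarith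
        moreover have e: "int (Suc j) = int j + 1" by simp
        moreover have "\<not> x (int j + 1) < x (int j)" using nd[of j] j by (simp add: desc_def)
        moreover have "x (int j) \<noteq> x (int j + 1)" using sp_inj[OF x] by simp
        ultimately show "x (int j) \<le> int j" unfolding e by linarith
      qed
    qed
    then show ?thesis using that by blast
  qed
  show ?thesis
  proof (rule ext)
    fix k :: int
    show "x k = id k"
    proof (cases "k \<in> pm_set n")
      case False then show ?thesis using sp_out[OF x] by simp
    next
      case True
      show ?thesis
      proof (cases "k > 0")
        case True
        define j where "j = nat k"
        have "k = int j" "1 \<le> j" "j \<le> n" using \<open>k \<in> pm_set n\<close> True
          by (auto simp: j_def pm_set_iff)
        then show ?thesis using lo[of j] hi[of j] by simp
      next
        case False
        then have "- k > 0" using True by (simp add: pm_set_iff)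
        define j where "j = nat (- k)"
        have "- k = int j" "1 \<le> j" "j \<le> n" using \<open>k \<in> pm_set n\<close> \<open>- k > 0\<close>
          by (auto simp: j_def pm_set_iff)
        then have "x (- k) = - k" using lo[of j] hi[of j] by simp
        then show ?thesis using sp_odd[OF x, of k] by simp
      qed
    qed
  qed
qed


section \<open>Words and Coxeter length\<close>

definition prodw :: "nat list \<Rightarrow> int \<Rightarrow> int" where
  "prodw ws = foldr (\<circ>) (map cox_gen ws) id"

lemma foldr_comp_id: "foldr (\<circ>) fs h = foldr (\<circ>) fs id \<circ> h"
  by (induction fs) (auto simp: fun_eq_iff)

lemma prodw_snoc: "prodw (ws @ [i]) = prodw ws \<circ> cox_gen i"
  unfolding prodw_def by (simp add: foldr_comp_id[of _ "cox_gen i"])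

lemma prodw_Nil: "prodw [] = id" by (simp add: prodw_def)

lemma prodw_sp: "set ws \<subseteq> {..<n} \<Longrightarrow> prodw ws \<in> signed_perms n"
proof (induction ws rule: rev_induct)
  case Nil then show ?case by (metis prodw_Nil sp_id)
next
  case (snoc i ws)
  then have "prodw ws \<in> signed_perms n" "i < n" by auto
  then show ?case unfolding prodw_snoc by (intro sp_comp cox_gen_sp)
qed

lemma Lc_prodw: "set ws \<subseteq> {..<n} \<Longrightarrow> Lc n (prodw ws) \<le> length ws"
proof (induction ws rule: rev_induct)
  case Nil then show ?case by (metis prodw_Nil Lc_id le_refl list.size(3))
next
  case (snoc i ws)
  then have "prodw ws \<in> signed_perms n" "i < n" "Lc n (prodw ws) \<le> length ws"
    using prodw_sp by auto
  moreover have "Lc n (prodw ws \<circ> cox_gen i) \<le> Lc n (prodw ws) + 1"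
    using Lc_swap(1)[of "prodw ws" n i] calculation(1,2) by (cases "desc (prodw ws) i") auto
  ultimately show ?case unfolding prodw_snoc by (simp only: length_append list.size)
qed

lemma exists_desc:
  assumes x: "x \<in> signed_perms n" and "x \<noteq> id"
  shows "\<exists>i<n. desc x i"
  using no_desc_id[OF x] assms(2) by blast

lemma comp_gen_gen: "x \<circ> cox_gen i \<circ> cox_gen i = x"
  by (simp add: fun_eq_iff cox_gen_invol)

lemma exists_word:
  "x \<in> signed_perms n \<Longrightarrow> \<exists>ws. length ws = Lc n x \<and> set ws \<subseteq> {..<n} \<and> prodw ws = x"
proof (induction "Lc n x" arbitrary: x)
  case 0
  have "x = id"
  proof (rule ccontr)
    assume "x \<noteq> id"
    then obtain i where "i < n" "desc x i" using exists_desc[OF "0.prems"] by blast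
    then show False using Lc_swap(2)[OF "0.prems" \<open>i < n\<close>] "0.hyps" by simp
  qed
  then show ?case using "0.hyps" by (intro exI[of _ "[]"]) (simp add: prodw_Nil)
next
  case (Suc m)
  have "x \<noteq> id" using Suc.hyps(2) Lc_id by (metis nat.distinct(1))
  then obtain i where i: "i < n" "desc x i" using exists_desc[OF Suc.prems] by blast
  define y where "y = x \<circ> cox_gen i"
  have y: "y \<in> signed_perms n" using Suc.prems i by (simp add: y_def sp_comp cox_gen_sp)
  have "Lc n y = m" using Lc_swap(1)[OF Suc.prems i(1)] i(2) Suc.hyps(2) by (simp add: y_def)
  then obtain ws where ws: "length ws = m" "set ws \<subseteq> {..<n}" "prodw ws = y"
    using Suc.hyps(1)[OF _ y] by metis
  show ?case
    by (rule exI[of _ "ws @ [i]"]) (use ws i Suc.hyps(2) in \<open>simp add: prodw_snoc y_def comp_gen_gen\<close>)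
qed

lemma cox_len_eq:
  assumes x: "x \<in> signed_perms n"
  shows "cox_len n x = Lc n x"
proof -
  obtain ws where ws: "length ws = Lc n x" "set ws \<subseteq> {..<n}" "prodw ws = x"
    using exists_word[OF x] by blast
  show ?thesis
    unfolding cox_len_def
  proof (rule Least_equality)
    show "\<exists>ws. length ws = Lc n x \<and> set ws \<subseteq> {..<n} \<and> foldr (\<circ>) (map cox_gen ws) id = x"
      using ws by (auto simp: prodw_def)
  next
    fix k assume "\<exists>ws. length ws = k \<and> set ws \<subseteq> {..<n} \<and> foldr (\<circ>) (map cox_gen ws) id = x"
    then obtain vs where "length vs = k" "set vs \<subseteq> {..<n}" "prodw vs = x"
      by (auto simp: prodw_def)
    then show "Lc n x \<le> k" using Lc_prodw by metis
  qed
qed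

section \<open>Reflections\<close>

definition sa :: "nat \<Rightarrow> int" where "sa i = (if i = 0 then -1 else int i)"
definition sb :: "nat \<Rightarrow> int" where "sb i = (if i = 0 then 1 else int i + 1)"

lemma tau_comp:
  assumes x: "x \<in> signed_perms n" and i: "i < n"
  shows "tau (x (sa i)) (x (sb i)) \<circ> x = x \<circ> cox_gen i"
proof (rule ext)
  fix p
  show "(tau (x (sa i)) (x (sb i)) \<circ> x) p = (x \<circ> cox_gen i) p"
  proof (cases "i = 0")
    case True
    have f: "x (- 1) = - x 1" "x 1 \<noteq> 0" using sp_facts0[OF x] i True by auto
    have inj: "x p = x q \<longleftrightarrow> p = q" for q using sp_inj[OF x] by blast
    have o: "x (- p) = - x p" using sp_odd[OF x] by blast
    show ?thesis using True f inj[of 1] inj[of "-1"] o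
      by (auto simp: tau_def sa_def sb_def cox_gen_def)
  next
    case False
    have f: "x (- int i - 1) = - x (int i + 1)" "x (- int i) = - x (int i)"
      "x (int i) \<noteq> x (int i + 1)" "x (int i) \<noteq> - x (int i + 1)" "x (int i) \<noteq> 0" "x (int i + 1) \<noteq> 0"
      using sp_facts[OF x _ i] False by auto
    have inj: "x p = x q \<longleftrightarrow> p = q" for q using sp_inj[OF x] by blast
    have o: "x (- p) = - x p" using sp_odd[OF x] by blast
    have o2: "- x p = x (- p)" using o by simp
    show ?thesis using False f inj[of "int i"] inj[of "int i + 1"] inj[of "- int i"] inj[of "- int i - 1"]
      by (auto simp: tau_def sa_def sb_def cox_gen_def o2)
  qed
qed


lemma tau_neg: "a \<noteq> 0 \<Longrightarrow> b \<noteq> 0 \<Longrightarrow> tau (- a) (- b) = tau a b"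
  by (auto simp: tau_def fun_eq_iff)

lemma sa_sb_in: "i < n \<Longrightarrow> sa i \<in> pm_set n \<and> sb i \<in> pm_set n \<and> sa i < sb i"
  by (auto simp: sa_def sb_def pm_set_iff)

lemma Oset_tau:
  assumes x: "x \<in> signed_perms n" and i: "i < n" and ab: "(a, b) \<in> Oset n x i"
  shows "tau a b = tau (x (sa i)) (x (sb i))"
proof (cases "i = 0")
  case True
  have f: "x (- 1) = - x 1" "x 1 \<noteq> 0" using sp_facts0[OF x] i True by auto
  have "a = - \<bar>x 1\<bar> \<and> b = \<bar>x 1\<bar>" using Oset_cases[OF x i ab] True by auto
  then show ?thesis using True f tau_comm[of "x 1" "- x 1"] by (cases "x 1 < 0") (auto simp: sa_def sb_def)
next
  case False
  have f: "x (int i) \<noteq> 0" "x (int i + 1) \<noteq> 0" using sp_facts[OF x _ i] False by auto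
  have c: "(a = min (x i) (x (int i + 1)) \<and> b = max (x i) (x (int i + 1))) \<or>
               (a = - max (x i) (x (int i + 1)) \<and> b = - min (x i) (x (int i + 1)))"
    using Oset_cases[OF x i ab] False by auto
  have t: "tau (x i) (x (int i + 1)) = tau (x (int i + 1)) (x i)" by (rule tau_comm)
  have t2: "tau (- x i) (- x (int i + 1)) = tau (x i) (x (int i + 1))"
       "tau (- x (int i + 1)) (- x i) = tau (x (int i + 1)) (x i)"
    using tau_neg f by auto
  show ?thesis using c t t2 False by (auto simp: sa_def sb_def min_def max_def)
qed

lemma conj_gen:
  assumes w: "w \<in> signed_perms n" and i: "i < n"
  shows "w \<circ> cox_gen i \<circ> inv w = tau (w (sa i)) (w (sb i))"
proof -
  have "w \<circ> cox_gen i \<circ> inv w = (tau (w (sa i)) (w (sb i)) \<circ> w) \<circ> inv w"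
    using tau_comp[OF w i] by simp
  also have "\<dots> = tau (w (sa i)) (w (sb i)) \<circ> (w \<circ> inv w)" by (rule comp_assoc)
  also have "\<dots> = tau (w (sa i)) (w (sb i)) \<circ> id"
    by (simp only: permutes_inv_o(1)[OF sp_perm[OF w]])
  also have "\<dots> = tau (w (sa i)) (w (sb i))" by (rule comp_id)
  finally show ?thesis .
qed

lemma reflections_char:
  "t \<in> reflections n \<longleftrightarrow> (\<exists>a b. a \<in> pm_set n \<and> b \<in> pm_set n \<and> a < b \<and> t = tau a b)"
proof
  assume "t \<in> reflections n"
  then obtain w i where wi: "w \<in> signed_perms n" "i < n" "t = w \<circ> cox_gen i \<circ> inv w"
    by (auto simp: reflections_def)
  have t: "t = tau (w (sa i)) (w (sb i))" using conj_gen[OF wi(1,2)] wi(3) by simp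
  have in1: "w (sa i) \<in> pm_set n" "w (sb i) \<in> pm_set n" using sa_sb_in[OF wi(2)] sp_in[OF wi(1)] by auto
  have ne: "w (sa i) \<noteq> w (sb i)" using sa_sb_in[OF wi(2)] sp_inj[OF wi(1)] by auto
  show "\<exists>a b. a \<in> pm_set n \<and> b \<in> pm_set n \<and> a < b \<and> t = tau a b"
  proof (cases "w (sa i) < w (sb i)")
    case True then show ?thesis using t in1 by blast
  next
    case False then show ?thesis using t in1 ne tau_comm by (metis linorder_neqE_linordered_idom)
  qed
next
  assume "\<exists>a b. a \<in> pm_set n \<and> b \<in> pm_set n \<and> a < b \<and> t = tau a b"
  then obtain a b where ab: "a \<in> pm_set n" "b \<in> pm_set n" "a < b" "t = tau a b" by blast
  have n1: "1 \<in> pm_set n" using ab(1) by (auto simp: pm_set_iff)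
  show "t \<in> reflections n"
  proof (cases "b = - a")
    case True
    define w where "w = tau 1 a"
    have w: "w \<in> signed_perms n" using tau_sp[OF n1 ab(1)] by (simp add: w_def)
    have "w (sa 0) = - a" "w (sb 0) = a" using ab(1) by (auto simp: w_def tau_def sa_def sb_def pm_set_iff)
    then have "w \<circ> cox_gen 0 \<circ> inv w = tau a b"
      using conj_gen[OF w, of 0] n1 True tau_comm by (auto simp: pm_set_iff)
    then have tw: "t = w \<circ> cox_gen 0 \<circ> inv w" using ab(4) by simp
    have "0 < n" using n1 by (auto simp: pm_set_iff)
    then show ?thesis unfolding reflections_def using w tw by blast
  next
    case False
    have n2: "2 \<le> n" using ab False by (auto simp: pm_set_iff)
    define u where "u = tau 1 a (2::int)"
    have uV: "u \<in> pm_set n" using ab(1) n2 by (auto simp: u_def tau_def pm_set_iff)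
    have ua: "u \<noteq> a" "u \<noteq> - a" using ab(1) by (auto simp: u_def tau_def pm_set_iff)
    define w where "w = tau u b \<circ> tau 1 a"
    have w: "w \<in> signed_perms n" unfolding w_def using tau_sp[OF uV ab(2)] tau_sp[OF n1 ab(1)] by (rule sp_comp)
    have "tau 1 a 1 = a" by (simp add: tau_def)
    moreover have "tau u b a = a" using ua ab(3) False by (auto simp: tau_def)
    ultimately have w1: "w (sa 1) = a" by (simp add: w_def sa_def)
    have "tau u b u = b" by (simp add: tau_def)
    then have w2: "w (sb 1) = b" by (simp add: w_def sb_def u_def)
    have "w \<circ> cox_gen 1 \<circ> inv w = tau a b" using conj_gen[OF w, of 1] n2 w1 w2 by simp
    then have tw: "t = w \<circ> cox_gen 1 \<circ> inv w" using ab(4) by simp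
    have "1 < n" using n2 by simp
    then show ?thesis unfolding reflections_def using w tw by blast
  qed
qed


section \<open>Weak order via inversion sets\<close>

lemma inv_tau: "a \<noteq> 0 \<Longrightarrow> b \<noteq> 0 \<Longrightarrow> inv (tau a b) = tau a b"
  by (rule inv_unique_comp) (auto simp: fun_eq_iff tau_invol)

lemma Inv_tau:
  assumes x: "x \<in> signed_perms n" and ab: "a \<in> pm_set n" "b \<in> pm_set n" "a < b"
  shows "(a, b) \<in> Inv n (tau a b \<circ> x) \<longleftrightarrow> (a, b) \<notin> Inv n x"
proof -
  have t: "tau a b \<in> signed_perms n" using tau_sp[OF ab(1,2)] .
  have bt: "bij (tau a b)" "bij x" using permutes_bij sp_perm t x by blast+
  have nz: "a \<noteq> 0" "b \<noteq> 0" using ab by (auto simp: pm_set_iff)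
  have i: "inv (tau a b \<circ> x) = inv x \<circ> tau a b" using o_inv_distrib[OF bt(1,2)] inv_tau[OF nz] by simp
  have "inv x a \<noteq> inv x b" using ab(3) by (metis less_irrefl sp_inv2[OF x])
  moreover have "tau a b a = b" "tau a b b = a" using ab(3) by (auto simp: tau_def)
  ultimately show ?thesis using ab by (auto simp: Inv_def i)
qed

lemma Inv_desc:
  assumes x: "x \<in> signed_perms n" and i: "i < n" and d: "desc x i"
  shows "Inv n (x \<circ> cox_gen i) = Inv n x - Oset n x i"
proof -
  have "Oset n x i \<subseteq> Inv n x" using Oset_Inv[OF x i] d by auto
  then show ?thesis using Inv_swap[OF x i] by auto
qed

lemma Inv_asc:
  assumes x: "x \<in> signed_perms n" and i: "i < n" and d: "\<not> desc x i"
  shows "Inv n (x \<circ> cox_gen i) = Inv n x \<union> Oset n x i"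
proof -
  have "Oset n x i \<inter> Inv n x = {}" using Oset_Inv[OF x i] d by auto
  then show ?thesis using Inv_swap[OF x i] by auto
qed

lemma Lc_tau:
  assumes "x \<in> signed_perms n" "a \<in> pm_set n" "b \<in> pm_set n" "a < b" "(a, b) \<in> Inv n x"
  shows "Lc n (tau a b \<circ> x) < Lc n x"
  using assms
proof (induction "Lc n x" arbitrary: x rule: less_induct)
  case less
  note x = less.prems(1)
  have "x \<noteq> id" using less.prems(5) Inv_id by auto
  then obtain i where i: "i < n" "desc x i" using exists_desc[OF x] by blast
  define y where "y = x \<circ> cox_gen i"
  have y: "y \<in> signed_perms n" using x i by (simp add: y_def sp_comp cox_gen_sp)
  have L1: "1 \<le> Lc n x" using Lc_swap(2)[OF x i(1) i(2)] .
  have Ly: "Lc n y = Lc n x - 1" using Lc_swap(1)[OF x i(1)] i(2) by (simp add: y_def)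
  have xy: "x = y \<circ> cox_gen i" by (simp add: y_def comp_gen_gen)
  show ?case
  proof (cases "(a, b) \<in> Oset n x i")
    case True
    have "tau a b \<circ> x = y" using Oset_tau[OF x i(1) True] tau_comp[OF x i(1)] by (simp add: y_def)
    then show ?thesis using Ly L1 by simp
  next
    case False
    have "(a, b) \<in> Inv n y" using Inv_desc[OF x i(1,2)] less.prems(5) False by (simp add: y_def)
    then have IH: "Lc n (tau a b \<circ> y) < Lc n y"
      using less.hyps[of y] Ly L1 y less.prems(2-4) by simp
    have ty: "tau a b \<circ> y \<in> signed_perms n" using tau_sp[OF less.prems(2,3)] y by (rule sp_comp)
    have "tau a b \<circ> x = (tau a b \<circ> y) \<circ> cox_gen i" using xy by (simp add: comp_assoc)
    moreover have "Lc n ((tau a b \<circ> y) \<circ> cox_gen i) \<le> Lc n (tau a b \<circ> y) + 1"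
      using Lc_swap(1)[OF ty i(1)] by (cases "desc (tau a b \<circ> y) i") auto
    ultimately show ?thesis using IH Ly L1 by simp
  qed
qed

lemma inv_set_char:
  assumes x: "x \<in> signed_perms n" and ab: "a \<in> pm_set n" "b \<in> pm_set n" "a < b"
  shows "tau a b \<in> inv_set n x \<longleftrightarrow> (a, b) \<in> Inv n x"
proof -
  have t: "tau a b \<in> signed_perms n" using tau_sp[OF ab(1,2)] .
  have tx: "tau a b \<circ> x \<in> signed_perms n" using t x by (rule sp_comp)
  have r: "tau a b \<in> reflections n" using reflections_char ab by blast
  have nz: "a \<noteq> 0" "b \<noteq> 0" using ab by (auto simp: pm_set_iff)
  have tt: "tau a b \<circ> (tau a b \<circ> x) = x" using tau_invol[OF nz] by (simp add: fun_eq_iff)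
  have "tau a b \<in> inv_set n x \<longleftrightarrow> Lc n (tau a b \<circ> x) < Lc n x"
    using r by (simp add: inv_set_def cox_len_eq[OF x] cox_len_eq[OF tx])
  also have "\<dots> \<longleftrightarrow> (a, b) \<in> Inv n x"
  proof
    assume h: "Lc n (tau a b \<circ> x) < Lc n x"
    show "(a, b) \<in> Inv n x"
    proof (rule ccontr)
      assume "(a, b) \<notin> Inv n x"
      then have "(a, b) \<in> Inv n (tau a b \<circ> x)" using Inv_tau[OF x ab] by simp
      from Lc_tau[OF tx ab this] have "Lc n x < Lc n (tau a b \<circ> x)" using tt by simp
      then show False using h by simp
    qed
  next
    assume "(a, b) \<in> Inv n x"
    then show "Lc n (tau a b \<circ> x) < Lc n x" using Lc_tau[OF x ab] by simp
  qed
  finally show ?thesis .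
qed

lemma weak_le_iff:
  assumes x: "x \<in> signed_perms n" and y: "y \<in> signed_perms n"
  shows "weak_le n x y \<longleftrightarrow> Inv n x \<subseteq> Inv n y"
proof
  assume h: "weak_le n x y"
  show "Inv n x \<subseteq> Inv n y"
  proof
    fix ab assume ab: "ab \<in> Inv n x"
    obtain a b where e: "ab = (a, b)" by fastforce
    have abV: "a \<in> pm_set n" "b \<in> pm_set n" "a < b" using ab e by (auto simp: Inv_def)
    have "tau a b \<in> inv_set n x" using inv_set_char[OF x abV] ab e by simp
    then have "tau a b \<in> inv_set n y" using h by (auto simp: weak_le_def)
    then show "ab \<in> Inv n y" using inv_set_char[OF y abV] e by simp
  qed
next
  assume h: "Inv n x \<subseteq> Inv n y"
  show "weak_le n x y" unfolding weak_le_def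
  proof
    fix t assume t: "t \<in> inv_set n x"
    then have "t \<in> reflections n" by (simp add: inv_set_def)
    then obtain a b where ab: "a \<in> pm_set n" "b \<in> pm_set n" "a < b" "t = tau a b"
      using reflections_char by blast
    then show "t \<in> inv_set n y" using inv_set_char[OF x ab(1-3)] inv_set_char[OF y ab(1-3)] h t by auto
  qed
qed

lemma bef_Inv:
  assumes z: "z \<in> signed_perms n" and uw: "u \<in> pm_set n" "w \<in> pm_set n" "u \<noteq> w"
  shows "inv z u < inv z w \<longleftrightarrow> (if u < w then (u, w) \<notin> Inv n z else (w, u) \<in> Inv n z)"
proof -
  have "inv z u \<noteq> inv z w" using uw(3) by (metis sp_inv2[OF z])
  then show ?thesis using uw by (auto simp: Inv_def)
qed

lemma Inv_inj:
  assumes x: "x \<in> signed_perms n" and y: "y \<in> signed_perms n" and e: "Inv n x = Inv n y"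
  shows "x = y"
proof -
  have same: "inv x u < inv x w \<longleftrightarrow> inv y u < inv y w"
    if "u \<in> pm_set n" "w \<in> pm_set n" "u \<noteq> w" for u w
    using bef_Inv[OF x that] bef_Inv[OF y that] e by simp
  define g where "g = inv y \<circ> x"
  have g: "g \<in> signed_perms n" unfolding g_def using sp_inv_sp[OF y] x by (rule sp_comp)
  have nd: "\<not> desc g i" if i: "i < n" for i
  proof (cases "i = 0")
    case True
    have V: "x 1 \<in> pm_set n" "x (-1) \<in> pm_set n" using i True sp_in[OF x] by (auto simp: pm_set_iff)
    have ne: "x 1 \<noteq> x (-1)" using sp_inj[OF x] by simp
    have "\<not> inv x (x 1) < inv x (x (-1))" using sp_inv1[OF x] by simp
    then have "\<not> inv y (x 1) < inv y (x (-1))" using same[OF V ne] by simp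
    moreover have "inv y (x (-1)) = - inv y (x 1)" using sp_odd[OF x] sp_odd[OF sp_inv_sp[OF y]] by simp
    ultimately show ?thesis using True by (simp add: desc_def g_def)
  next
    case False
    have V: "x (int i + 1) \<in> pm_set n" "x (int i) \<in> pm_set n" using i False sp_in[OF x] by (auto simp: pm_set_iff)
    have ne: "x (int i + 1) \<noteq> x (int i)" using sp_inj[OF x] by simp
    have "\<not> inv x (x (int i + 1)) < inv x (x (int i))" using sp_inv1[OF x] by simp
    then have "\<not> inv y (x (int i + 1)) < inv y (x (int i))" using same[OF V ne] by simp
    then show ?thesis using False by (simp add: desc_def g_def)
  qed
  have "g = id" using no_desc_id[OF g] nd by blast
  then have "y \<circ> g = y" by simp
  moreover have "y \<circ> g = x" unfolding g_def
    by (simp add: fun_eq_iff sp_inv2[OF y])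
  ultimately show ?thesis by simp
qed

lemma Inv_sym:
  assumes x: "x \<in> signed_perms n"
  shows "(a, b) \<in> Inv n x \<longleftrightarrow> (- b, - a) \<in> Inv n x"
proof -
  have o: "inv x (- v) = - inv x v" for v using sp_odd[OF sp_inv_sp[OF x]] by simp
  show ?thesis by (auto simp: Inv_def o pm_set_iff)
qed


definition WF :: "nat \<Rightarrow> (int \<times> int) set" where
  "WF n = {(a, b). a \<in> pm_set n \<and> b \<in> pm_set n \<and> a < b}"

definition cotrans :: "nat \<Rightarrow> (int \<times> int) set \<Rightarrow> bool" where
  "cotrans n T \<longleftrightarrow> (\<forall>a b c. (a, c) \<in> T \<longrightarrow> b \<in> pm_set n \<longrightarrow> a < b \<longrightarrow> b < c \<longrightarrow> (a, b) \<in> T \<or> (b, c) \<in> T)"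

definition symr :: "(int \<times> int) set \<Rightarrow> bool" where
  "symr T \<longleftrightarrow> (\<forall>a b. (a, b) \<in> T \<longrightarrow> (- b, - a) \<in> T)"

lemma Inv_WF: "Inv n x \<subseteq> WF n" by (auto simp: Inv_def WF_def)

lemma Inv_trans: "trans (Inv n x)"
  by (auto simp: trans_def Inv_def)

lemma Inv_cotrans: assumes x: "x \<in> signed_perms n" shows "cotrans n (Inv n x)"
  unfolding cotrans_def
proof (intro allI impI)
  fix a b c assume h: "(a, c) \<in> Inv n x" "b \<in> pm_set n" "a < b" "b < c"
  have ne: "inv x b \<noteq> inv x a"
  proof
    assume "inv x b = inv x a"
    then have "x (inv x b) = x (inv x a)" by simp
    then show False using h(3) sp_inv2[OF x] by simp
  qed
  show "(a, b) \<in> Inv n x \<or> (b, c) \<in> Inv n x"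
  proof (cases "inv x b < inv x a")
    case True then show ?thesis using h by (auto simp: Inv_def)
  next
    case False
    then have "inv x a < inv x b" using ne by simp
    then show ?thesis using h by (auto simp: Inv_def)
  qed
qed

lemma Inv_symr: "x \<in> signed_perms n \<Longrightarrow> symr (Inv n x)"
  unfolding symr_def using Inv_sym by blast

lemma trancl_WF1: "(a, b) \<in> R\<^sup>+ \<Longrightarrow> R \<subseteq> WF n \<Longrightarrow> (a, b) \<in> WF n"
  by (induction rule: trancl_induct) (auto simp: WF_def)

lemma trancl_WF: "R \<subseteq> WF n \<Longrightarrow> R\<^sup>+ \<subseteq> WF n"
  using trancl_WF1 by auto

lemma trancl_cotrans:
  assumes c1: "cotrans n R1" and c2: "cotrans n R2" and w: "R1 \<subseteq> WF n" "R2 \<subseteq> WF n"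
  shows "cotrans n ((R1 \<union> R2)\<^sup>+)"
proof -
  have W: "(R1 \<union> R2)\<^sup>+ \<subseteq> WF n" using trancl_WF[of "R1 \<union> R2" n] w by auto
  have "(a, c) \<in> (R1 \<union> R2)\<^sup>+ \<Longrightarrow> \<forall>b. b \<in> pm_set n \<longrightarrow> a < b \<longrightarrow> b < c \<longrightarrow>
      (a, b) \<in> (R1 \<union> R2)\<^sup>+ \<or> (b, c) \<in> (R1 \<union> R2)\<^sup>+" for a c
  proof (induction rule: trancl_induct)
    case (base c)
    then show ?case using c1 c2 unfolding cotrans_def by blast
  next
    case (step d c)
    show ?case
    proof (intro allI impI)
      fix b assume b: "b \<in> pm_set n" "a < b" "b < c"
      have ad: "a < d" using step.hyps(1) W by (auto simp: WF_def)
      have dc: "d < c" using step.hyps(2) w by (auto simp: WF_def)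
      consider "b < d" | "b = d" | "d < b" by linarith
      then show "(a, b) \<in> (R1 \<union> R2)\<^sup>+ \<or> (b, c) \<in> (R1 \<union> R2)\<^sup>+"
      proof cases
        case 1
        then have "(a, b) \<in> (R1 \<union> R2)\<^sup>+ \<or> (b, d) \<in> (R1 \<union> R2)\<^sup>+" using step.IH b by blast
        then show ?thesis using step.hyps(2) by (meson trancl.trancl_into_trancl)
      next
        case 2 then show ?thesis using step.hyps(1) by simp
      next
        case 3
        then have "(d, b) \<in> R1 \<union> R2 \<or> (b, c) \<in> R1 \<union> R2"
          using step.hyps(2) c1 c2 b unfolding cotrans_def by blast
        then show ?thesis using step.hyps(1) by (meson r_into_trancl' trancl.trancl_into_trancl)
      qed
    qed
  qed
  then show ?thesis unfolding cotrans_def by blast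
qed

lemma trancl_symr:
  assumes "symr R" shows "symr (R\<^sup>+)"
proof -
  have "(a, c) \<in> R\<^sup>+ \<Longrightarrow> (- c, - a) \<in> R\<^sup>+" for a c
  proof (induction rule: trancl_induct)
    case (base c) then show ?case using assms by (auto simp: symr_def)
  next
    case (step d c)
    have "(- c, - d) \<in> R" using step.hyps(2) assms by (auto simp: symr_def)
    then show ?case using step.IH by (meson trancl_into_trancl2)
  qed
  then show ?thesis by (auto simp: symr_def)
qed

lemma symr_Un: "symr A \<Longrightarrow> symr B \<Longrightarrow> symr (A \<union> B)"
  by (auto simp: symr_def)


lemma Oset_two:
  assumes x: "x \<in> signed_perms n" and i: "i < n"
    and e: "e \<in> Oset n x i" and ab: "(a, b) \<in> Oset n x i"
  shows "e = (a, b) \<or> e = (- b, - a)"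
proof -
  obtain c d where cd: "e = (c, d)" by fastforce
  show ?thesis using Oset_cases[OF x i ab] Oset_cases[OF x i, of c d] e cd by auto
qed

lemma adj_gen:
  assumes x: "x \<in> signed_perms n" and ab: "a \<in> pm_set n" "b \<in> pm_set n" "a < b"
    and PQ: "inv x a < inv x b"
    and nb: "\<And>r. r \<in> pm_set n \<Longrightarrow> \<not> (inv x a < r \<and> r < inv x b)"
  shows "\<exists>i<n. \<not> desc x i \<and> (a, b) \<in> Oset n x i"
proof -
  define P where "P = inv x a"
  define Q where "Q = inv x b"
  have PV: "P \<in> pm_set n" "Q \<in> pm_set n" using sp_in[OF sp_inv_sp[OF x]] ab by (auto simp: P_def Q_def)
  have xP: "x P = a" "x Q = b" using sp_inv2[OF x] by (auto simp: P_def Q_def)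
  have PQ': "P < Q" using PQ by (simp add: P_def Q_def)
  have nb': "\<And>r. r \<in> pm_set n \<Longrightarrow> \<not> (P < r \<and> r < Q)" using nb by (simp add: P_def Q_def)
  have d: "1 \<le> P \<or> Q \<le> -1 \<or> (P \<le> -1 \<and> 1 \<le> Q)" using PV PQ' unfolding pm_set_iff by arith
  consider "1 \<le> P" | "Q \<le> -1" | "P \<le> -1" "1 \<le> Q" using d by blast
  then show ?thesis
  proof cases
    case 1
    have "Q = P + 1"
    proof (rule ccontr)
      assume "Q \<noteq> P + 1"
      then have "P + 1 \<in> pm_set n" "P < P + 1 \<and> P + 1 < Q" using 1 PV PQ' by (auto simp: pm_set_iff)
      then show False using nb' by blast
    qed
    define i where "i = nat P"
    have i: "int i = P" "0 < i" "i < n" using 1 PV \<open>Q = P + 1\<close> by (auto simp: i_def pm_set_iff)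
    have s: "swp i (int i) (int i + 1)" using i by (simp add: swp_def)
    have "x (int i) < x (int i + 1)" using xP i \<open>Q = P + 1\<close> ab(3) by simp
    then have "(x (int i), x (int i + 1)) \<in> Oset n x i" using Oset_memI(1)[OF x i(3) s] by simp
    moreover have "\<not> desc x i" using \<open>x (int i) < x (int i + 1)\<close> i by (simp add: desc_def)
    ultimately show ?thesis using i xP \<open>Q = P + 1\<close> by auto
  next
    case 2
    have "P = Q - 1"
    proof (rule ccontr)
      assume "P \<noteq> Q - 1"
      then have "Q - 1 \<in> pm_set n" "P < Q - 1 \<and> Q - 1 < Q" using 2 PV PQ' by (auto simp: pm_set_iff)
      then show False using nb' by blast
    qed
    define i where "i = nat (- Q)"
    have i: "int i = - Q" "0 < i" "i < n" using 2 PV \<open>P = Q - 1\<close> by (auto simp: i_def pm_set_iff)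
    have s: "swp i (- int i - 1) (- int i)" using i by (simp add: swp_def)
    have e: "- int i - 1 = P" "- int i = Q" using i \<open>P = Q - 1\<close> by auto
    have "x (- int i - 1) < x (- int i)" using xP e ab(3) by simp
    then have "(x (- int i - 1), x (- int i)) \<in> Oset n x i" using Oset_memI(1)[OF x i(3) s] by simp
    moreover have "\<not> desc x i"
      using \<open>x (- int i - 1) < x (- int i)\<close> i sp_facts[OF x i(2,3)] by (simp add: desc_def)
    ultimately show ?thesis using i xP e by auto
  next
    case 3
    have "P = -1"
    proof (rule ccontr)
      assume "P \<noteq> -1"
      then have "-1 \<in> pm_set n" "P < -1 \<and> -1 < Q" using 3 PV by (auto simp: pm_set_iff)
      then show False using nb' by blast
    qed
    have "Q = 1"
    proof (rule ccontr)
      assume "Q \<noteq> 1"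
      then have "1 \<in> pm_set n" "P < 1 \<and> 1 < Q" using 3 PV by (auto simp: pm_set_iff)
      then show False using nb' by blast
    qed
    have n0: "0 < n" using PV by (auto simp: pm_set_iff)
    have s: "swp 0 (-1) 1" by (simp add: swp_def)
    have "x (-1) < x 1" using xP \<open>P = -1\<close> \<open>Q = 1\<close> ab(3) by simp
    then have "(x (-1), x 1) \<in> Oset n x 0" using Oset_memI(1)[OF x n0 s] by simp
    moreover have "\<not> desc x 0" using \<open>x (-1) < x 1\<close> sp_facts0[OF x n0] by (simp add: desc_def)
    ultimately show ?thesis using n0 xP \<open>P = -1\<close> \<open>Q = 1\<close> by auto
  qed
qed

lemma realize_step:
  assumes x: "x \<in> signed_perms n" and T: "T \<subseteq> WF n" "trans T" "cotrans n T" "symr T"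
    and sub: "Inv n x \<subseteq> T" and ne: "Inv n x \<noteq> T"
  shows "\<exists>y \<in> signed_perms n. Inv n y \<subseteq> T \<and> card (T - Inv n y) < card (T - Inv n x)"
proof -
  define M where "M = T - Inv n x"
  obtain ab0 where "ab0 \<in> M" using sub ne by (auto simp: M_def)
  define m where "m = (\<lambda>(a, b). nat (inv x b - inv x a))"
  obtain ab where abM: "ab \<in> M" and minm: "\<And>cd. cd \<in> M \<Longrightarrow> m ab \<le> m cd"
    using ex_has_least_nat[of "\<lambda>p. p \<in> M" ab0 m] \<open>ab0 \<in> M\<close> by blast
  obtain a b where e: "ab = (a, b)" by fastforce
  have abT: "(a, b) \<in> T" "(a, b) \<notin> Inv n x" using abM e by (auto simp: M_def)
  have abV: "a \<in> pm_set n" "b \<in> pm_set n" "a < b" using abT T(1) by (auto simp: WF_def)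
  have PQ: "inv x a < inv x b"
  proof -
    have "inv x a \<noteq> inv x b"
    proof
      assume "inv x a = inv x b"
      then have "x (inv x a) = x (inv x b)" by simp
      then show False using abV(3) sp_inv2[OF x] by simp
    qed
    then show ?thesis using abT(2) abV by (auto simp: Inv_def)
  qed
  have mab: "m (a, b) = nat (inv x b - inv x a)" by (simp add: m_def)
  have nb: "\<not> (inv x a < r \<and> r < inv x b)" if r: "r \<in> pm_set n" for r
  proof
    assume h: "inv x a < r \<and> r < inv x b"
    define w where "w = x r"
    have wV: "w \<in> pm_set n" using r sp_in[OF x] by (simp add: w_def)
    have iw: "inv x w = r" using sp_inv1[OF x] by (simp add: w_def)
    have wa: "w \<noteq> a" "w \<noteq> b" using h iw by auto
    consider "a < w" "w < b" | "w < a" | "b < w" using wa abV by linarith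
    then show False
    proof cases
      case 1
      then have "(a, w) \<in> T \<or> (w, b) \<in> T" using T(3) abT(1) wV unfolding cotrans_def by blast
      then show False
      proof
        assume "(a, w) \<in> T"
        moreover have "(a, w) \<notin> Inv n x" using h iw by (auto simp: Inv_def)
        ultimately have "(a, w) \<in> M" by (simp add: M_def)
        then have "m (a, b) \<le> m (a, w)" using minm e by blast
        then show False using h iw by (simp add: m_def nat_le_eq_zle)
      next
        assume "(w, b) \<in> T"
        moreover have "(w, b) \<notin> Inv n x" using h iw by (auto simp: Inv_def)
        ultimately have "(w, b) \<in> M" by (simp add: M_def)
        then have "m (a, b) \<le> m (w, b)" using minm e by blast
        then show False using h iw by (simp add: m_def nat_le_eq_zle)
      qed
    next
      case 2
      have "(w, a) \<in> Inv n x" using 2 h iw wV abV by (auto simp: Inv_def)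
      then have "(w, b) \<in> T" using sub abT(1) T(2) by (meson subsetD transD)
      moreover have "(w, b) \<notin> Inv n x" using h iw by (auto simp: Inv_def)
      ultimately have "(w, b) \<in> M" by (simp add: M_def)
      then have "m (a, b) \<le> m (w, b)" using minm e by blast
      then show False using h iw by (simp add: m_def nat_le_eq_zle)
    next
      case 3
      have "(b, w) \<in> Inv n x" using 3 h iw wV abV by (auto simp: Inv_def)
      then have "(a, w) \<in> T" using sub abT(1) T(2) by (meson subsetD transD)
      moreover have "(a, w) \<notin> Inv n x" using h iw by (auto simp: Inv_def)
      ultimately have "(a, w) \<in> M" by (simp add: M_def)
      then have "m (a, b) \<le> m (a, w)" using minm e by blast
      then show False using h iw by (simp add: m_def nat_le_eq_zle)
    qed
  qed
  obtain i where i: "i < n" "\<not> desc x i" "(a, b) \<in> Oset n x i"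
    using adj_gen[OF x abV PQ nb] by blast
  define y where "y = x \<circ> cox_gen i"
  have y: "y \<in> signed_perms n" using x i by (simp add: y_def sp_comp cox_gen_sp)
  have Iy: "Inv n y = Inv n x \<union> Oset n x i" using Inv_asc[OF x i(1,2)] by (simp add: y_def)
  have "Oset n x i \<subseteq> T"
  proof
    fix p assume "p \<in> Oset n x i"
    then have "p = (a, b) \<or> p = (- b, - a)" using Oset_two[OF x i(1) _ i(3)] by blast
    then show "p \<in> T" using abT(1) T(4) by (auto simp: symr_def)
  qed
  then have sy: "Inv n y \<subseteq> T" using Iy sub by auto
  have "WF n \<subseteq> pm_set n \<times> pm_set n" by (auto simp: WF_def)
  then have fin: "finite T" using T(1) finite_subset finite_cartesian_product[OF finite_pm_set finite_pm_set]
    by metis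
  have "T - Inv n y \<subset> T - Inv n x" using Iy i(3) abT by auto
  then have "card (T - Inv n y) < card (T - Inv n x)" using fin by (meson finite_Diff psubset_card_mono)
  then show ?thesis using y sy by blast
qed

lemma realize:
  assumes T: "T \<subseteq> WF n" "trans T" "cotrans n T" "symr T"
  shows "\<exists>x \<in> signed_perms n. Inv n x = T"
proof -
  have "\<forall>x. x \<in> signed_perms n \<longrightarrow> Inv n x \<subseteq> T \<longrightarrow> card (T - Inv n x) = k \<longrightarrow>
      (\<exists>y \<in> signed_perms n. Inv n y = T)" for k
  proof (induction k rule: less_induct)
    case (less k)
    show ?case
    proof (intro allI impI)
      fix x assume x: "x \<in> signed_perms n" "Inv n x \<subseteq> T" "card (T - Inv n x) = k"
      show "\<exists>y \<in> signed_perms n. Inv n y = T"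
      proof (cases "Inv n x = T")
        case True then show ?thesis using x by blast
      next
        case False
        then obtain y where "y \<in> signed_perms n" "Inv n y \<subseteq> T" "card (T - Inv n y) < card (T - Inv n x)"
          using realize_step[OF x(1) T x(2)] by blast
        then show ?thesis using less.IH x(3) by blast
      qed
    qed
  qed
  then show ?thesis using sp_id[of n] Inv_id[of n] by blast
qed


lemma join_Inv:
  assumes x: "x \<in> signed_perms n" and z: "z \<in> signed_perms n"
    and j: "is_join (signed_perms n) (weak_le n) x z m"
  shows "Inv n m = (Inv n x \<union> Inv n z)\<^sup>+"
proof -
  define T where "T = (Inv n x \<union> Inv n z)\<^sup>+"
  have m: "m \<in> signed_perms n" "weak_le n x m" "weak_le n z m" using j by (auto simp: is_join_def)
  have TW: "T \<subseteq> WF n" unfolding T_def using Inv_WF by (intro trancl_WF) auto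
  have Tt: "trans T" unfolding T_def by (rule trans_trancl)
  have Tc: "cotrans n T" unfolding T_def using Inv_cotrans[OF x] Inv_cotrans[OF z] Inv_WF
    by (intro trancl_cotrans) auto
  have Ts: "symr T" unfolding T_def using Inv_symr[OF x] Inv_symr[OF z]
    by (intro trancl_symr symr_Un)
  obtain u where u: "u \<in> signed_perms n" "Inv n u = T" using realize[OF TW Tt Tc Ts] by blast
  have "Inv n x \<subseteq> T" "Inv n z \<subseteq> T" unfolding T_def by auto
  then have "weak_le n x u" "weak_le n z u" using weak_le_iff[OF x u(1)] weak_le_iff[OF z u(1)] u(2) by auto
  then have "weak_le n m u" using j u(1) by (auto simp: is_join_def)
  then have 1: "Inv n m \<subseteq> T" using weak_le_iff[OF m(1) u(1)] u(2) by auto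
  have "Inv n x \<union> Inv n z \<subseteq> Inv n m" using weak_le_iff[OF x m(1)] weak_le_iff[OF z m(1)] m by auto
  then have "T \<subseteq> (Inv n m)\<^sup>+" unfolding T_def using trancl_mono by blast
  also have "(Inv n m)\<^sup>+ = Inv n m" using Inv_trans by (rule trancl_id)
  finally show ?thesis using 1 by (simp add: T_def)
qed

definition w0 :: "nat \<Rightarrow> int \<Rightarrow> int" where
  "w0 n p = (if p \<in> pm_set n then - p else p)"

definition nx :: "nat \<Rightarrow> (int \<Rightarrow> int) \<Rightarrow> int \<Rightarrow> int" where
  "nx n x = x \<circ> w0 n"

lemma w0_invol: "w0 n (w0 n p) = p"
  by (auto simp: w0_def pm_set_iff)

lemma w0_sp: "w0 n \<in> signed_perms n"
  unfolding signed_perms_def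
  by (auto intro!: invol_permutes w0_invol simp: w0_def pm_set_iff)

lemma nx_sp: "x \<in> signed_perms n \<Longrightarrow> nx n x \<in> signed_perms n"
  unfolding nx_def using w0_sp by (rule sp_comp[rotated])

lemma nx_nx: "nx n (nx n x) = x"
  by (simp add: nx_def fun_eq_iff w0_invol)

lemma inv_nx:
  assumes x: "x \<in> signed_perms n" and v: "v \<in> pm_set n"
  shows "inv (nx n x) v = - inv x v"
proof -
  have b: "bij x" "bij (w0 n)" using x w0_sp permutes_bij sp_perm by blast+
  have "inv (w0 n) = w0 n" by (rule inv_unique_comp) (auto simp: fun_eq_iff w0_invol)
  then have "inv (nx n x) = w0 n \<circ> inv x" using o_inv_distrib[OF b] by (simp add: nx_def)
  moreover have "inv x v \<in> pm_set n" using v sp_in[OF sp_inv_sp[OF x]] by blast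
  ultimately show ?thesis by (simp add: w0_def)
qed

lemma Inv_nx:
  assumes x: "x \<in> signed_perms n"
  shows "Inv n (nx n x) = WF n - Inv n x"
proof (intro set_eqI)
  fix ab :: "int \<times> int"
  obtain a b where e: "ab = (a, b)" by fastforce
  show "ab \<in> Inv n (nx n x) \<longleftrightarrow> ab \<in> WF n - Inv n x"
  proof (cases "a \<in> pm_set n \<and> b \<in> pm_set n \<and> a < b")
    case True
    have "inv x a \<noteq> inv x b"
    proof
      assume "inv x a = inv x b"
      then have "x (inv x a) = x (inv x b)" by simp
      then show False using True sp_inv2[OF x] by simp
    qed
    then show ?thesis using True e inv_nx[OF x] by (auto simp: Inv_def WF_def)
  next
    case False then show ?thesis using e by (auto simp: Inv_def WF_def)
  qed
qed

lemma weak_le_nx: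
  assumes x: "x \<in> signed_perms n" and y: "y \<in> signed_perms n"
  shows "weak_le n (nx n x) (nx n y) \<longleftrightarrow> weak_le n y x"
  using weak_le_iff[OF nx_sp[OF x] nx_sp[OF y]] weak_le_iff[OF y x] Inv_nx[OF x] Inv_nx[OF y]
    Inv_WF[of n x] Inv_WF[of n y] by auto

lemma meet_join:
  assumes x: "x \<in> signed_perms n" and z: "z \<in> signed_perms n"
    and mt: "is_meet (signed_perms n) (weak_le n) x z m"
  shows "is_join (signed_perms n) (weak_le n) (nx n x) (nx n z) (nx n m)"
proof -
  have m: "m \<in> signed_perms n" "weak_le n m x" "weak_le n m z"
    and u: "\<And>w. w \<in> signed_perms n \<Longrightarrow> weak_le n w x \<Longrightarrow> weak_le n w z \<Longrightarrow> weak_le n w m"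
    using mt by (auto simp: is_meet_def)
  show ?thesis unfolding is_join_def
  proof (intro conjI ballI impI)
    show "nx n m \<in> signed_perms n" using nx_sp[OF m(1)] .
    show "weak_le n (nx n x) (nx n m)" using weak_le_nx[OF x m(1)] m by simp
    show "weak_le n (nx n z) (nx n m)" using weak_le_nx[OF z m(1)] m by simp
  next
    fix w assume w: "w \<in> signed_perms n" and h: "weak_le n (nx n x) w \<and> weak_le n (nx n z) w"
    have w': "nx n w \<in> signed_perms n" using nx_sp[OF w] .
    have "weak_le n (nx n w) x" "weak_le n (nx n w) z"
      using h weak_le_nx[OF x w'] weak_le_nx[OF z w'] by (simp_all add: nx_nx)
    then have "weak_le n (nx n w) m" using u[OF w'] by simp
    then show "weak_le n (nx n m) w" using weak_le_nx[OF m(1) w'] by (simp add: nx_nx)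
  qed
qed


section \<open>The invariant E\<close>

definition Dset :: "nat \<Rightarrow> (int \<Rightarrow> bool) \<Rightarrow> int \<Rightarrow> int \<Rightarrow> int set" where
  "Dset n lab i j = {l \<in> pm_set n. (i < l \<and> l < j \<and> \<not> lab l) \<or> ((l = i \<or> l = j) \<and> lab l)}"

definition Uset :: "nat \<Rightarrow> (int \<Rightarrow> bool) \<Rightarrow> int \<Rightarrow> int \<Rightarrow> int set" where
  "Uset n lab i j = {l \<in> pm_set n. (i < l \<and> l < j \<and> lab l) \<or> ((l = i \<or> l = j) \<and> \<not> lab l)}"

definition befR :: "(int \<times> int) set \<Rightarrow> int \<Rightarrow> int \<Rightarrow> bool" where
  "befR I p q \<longleftrightarrow> (p < q \<and> (p, q) \<notin> I) \<or> (q < p \<and> (q, p) \<in> I)"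

definition Erel :: "nat \<Rightarrow> (int \<Rightarrow> bool) \<Rightarrow> int \<Rightarrow> int \<Rightarrow> (int \<times> int) set \<Rightarrow> bool" where
  "Erel n lab i j I \<longleftrightarrow> (\<forall>p \<in> Dset n lab i j. \<forall>q \<in> Uset n lab i j. befR I p q)"

lemma E_change:
  assumes sub: "I \<subseteq> I'" and i_le: "i \<le> j"
    and new: "\<And>l e. (l, e) \<in> I' \<Longrightarrow> (l, e) \<notin> I \<Longrightarrow> \<exists>b \<in> pm_set n. l < b \<and> b < e \<and>
       ((lab b \<and> (l, b) \<in> I \<and> (b, e) \<notin> I') \<or> (\<not> lab b \<and> (l, b) \<notin> I' \<and> (b, e) \<in> I))"
  shows "Erel n lab i j I' \<longleftrightarrow> Erel n lab i j I"
proof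
  assume E': "Erel n lab i j I'"
  show "Erel n lab i j I" unfolding Erel_def
  proof (intro ballI)
    fix p q assume p: "p \<in> Dset n lab i j" and q: "q \<in> Uset n lab i j"
    have pq: "p \<noteq> q" using p q by (auto simp: Dset_def Uset_def)
    have rng: "i \<le> p" "p \<le> j" "i \<le> q" "q \<le> j" using p q i_le by (auto simp: Dset_def Uset_def)
    show "befR I p q"
    proof (rule ccontr)
      assume nb: "\<not> befR I p q"
      have b': "befR I' p q" using E' p q by (auto simp: Erel_def)
      show False
      proof (cases "p < q")
        case True
        then show False using nb b' sub by (auto simp: befR_def)
      next
        case False
        then have qp: "q < p" using pq by simp
        then have "(q, p) \<in> I'" "(q, p) \<notin> I" using nb b' by (auto simp: befR_def)
        then obtain b where b: "b \<in> pm_set n" "q < b" "b < p"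
          "(lab b \<and> (q, b) \<in> I \<and> (b, p) \<notin> I') \<or> (\<not> lab b \<and> (q, b) \<notin> I' \<and> (b, p) \<in> I)"
          using new by blast
        show False
        proof (cases "lab b")
          case True
          then have "b \<in> Uset n lab i j" using b rng by (auto simp: Uset_def)
          then have "befR I' p b" using E' p by (auto simp: Erel_def)
          then show False using b True by (auto simp: befR_def)
        next
          case False
          then have "b \<in> Dset n lab i j" using b rng by (auto simp: Dset_def)
          then have "befR I' b q" using E' q by (auto simp: Erel_def)
          then show False using b False by (auto simp: befR_def)
        qed
      qed
    qed
  qed
next
  assume E: "Erel n lab i j I"
  show "Erel n lab i j I'" unfolding Erel_def
  proof (intro ballI)
    fix p q assume p: "p \<in> Dset n lab i j" and q: "q \<in> Uset n lab i j"
    have pq: "p \<noteq> q" using p q by (auto simp: Dset_def Uset_def)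
    have rng: "i \<le> p" "p \<le> j" "i \<le> q" "q \<le> j" using p q i_le by (auto simp: Dset_def Uset_def)
    have b0: "befR I p q" using E p q by (auto simp: Erel_def)
    show "befR I' p q"
    proof (rule ccontr)
      assume nb: "\<not> befR I' p q"
      show False
      proof (cases "p < q")
        case False
        then show False using nb b0 sub pq by (auto simp: befR_def)
      next
        case True
        then have "(p, q) \<in> I'" "(p, q) \<notin> I" using nb b0 by (auto simp: befR_def)
        then obtain b where b: "b \<in> pm_set n" "p < b" "b < q"
          "(lab b \<and> (p, b) \<in> I \<and> (b, q) \<notin> I') \<or> (\<not> lab b \<and> (p, b) \<notin> I' \<and> (b, q) \<in> I)"
          using new by blast
        show False
        proof (cases "lab b")
          case True
          then have "b \<in> Uset n lab i j" using b rng by (auto simp: Uset_def)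
          then have "befR I p b" using E p by (auto simp: Erel_def)
          then show False using b True by (auto simp: befR_def)
        next
          case False
          then have "b \<in> Dset n lab i j" using b rng by (auto simp: Dset_def)
          then have "befR I b q" using E q by (auto simp: Erel_def)
          then show False using b False by (auto simp: befR_def)
        qed
      qed
    qed
  qed
qed

definition wit :: "(int \<Rightarrow> bool) \<Rightarrow> (int \<times> int) set \<Rightarrow> int \<Rightarrow> int \<Rightarrow> int \<Rightarrow> bool" where
  "wit lab I a b c \<longleftrightarrow> (lab b \<and> (a, b) \<in> I \<and> (b, c) \<notin> I) \<or> (\<not> lab b \<and> (a, b) \<notin> I \<and> (b, c) \<in> I)"

lemma trancl_add:
  assumes t: "trans I" and W: "I \<subseteq> WF n" and ac: "a < c"
  shows "(I \<union> {(a, c)})\<^sup>+ = I \<union> {(l, e). (l = a \<or> (l, a) \<in> I) \<and> (e = c \<or> (c, e) \<in> I)}"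
    (is "_ = ?N")
proof
  have lt: "(u, v) \<in> I \<Longrightarrow> u < v" for u v using W by (auto simp: WF_def)
  have "trans ?N"
  proof (rule transI)
    fix x y z assume xy: "(x, y) \<in> ?N" and yz: "(y, z) \<in> ?N"
    show "(x, z) \<in> ?N"
    proof (cases "(x, y) \<in> I")
      case xyI: True
      show ?thesis
      proof (cases "(y, z) \<in> I")
        case True then show ?thesis using xyI t by (meson UnI1 transD)
      next
        case False
        then have "(y = a \<or> (y, a) \<in> I) \<and> (z = c \<or> (c, z) \<in> I)" using yz by auto
        then show ?thesis using xyI t by (auto dest: transD)
      qed
    next
      case xyN: False
      then have h1: "(x = a \<or> (x, a) \<in> I) \<and> (y = c \<or> (c, y) \<in> I)" using xy by auto
      show ?thesis
      proof (cases "(y, z) \<in> I")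
        case True then show ?thesis using h1 t by (auto dest: transD)
      next
        case False
        then have "(y = a \<or> (y, a) \<in> I) \<and> (z = c \<or> (c, z) \<in> I)" using yz by auto
        then have "y \<le> a" "c \<le> y" using h1 lt by (auto dest: lt) 
        then show ?thesis using ac by simp
      qed
    qed
  qed
  moreover have "I \<union> {(a, c)} \<subseteq> ?N" by auto
  ultimately show "(I \<union> {(a, c)})\<^sup>+ \<subseteq> ?N"
  proof -
    assume tN: "trans ?N" and sN: "I \<union> {(a, c)} \<subseteq> ?N"
    have "(I \<union> {(a, c)})\<^sup>+ \<subseteq> ?N\<^sup>+" using sN trancl_mono by blast
    also have "?N\<^sup>+ = ?N" using tN by (rule trancl_id)
    finally show ?thesis .
  qed
next
  show "?N \<subseteq> (I \<union> {(a, c)})\<^sup>+"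
  proof
    fix p assume "p \<in> ?N"
    then consider "p \<in> I" | l e where "p = (l, e)" "l = a \<or> (l, a) \<in> I" "e = c \<or> (c, e) \<in> I" by auto
    then show "p \<in> (I \<union> {(a, c)})\<^sup>+"
    proof cases
      case 1 then show ?thesis by (blast intro: r_into_trancl')
    next
      case 2
      have ac': "(a, c) \<in> (I \<union> {(a, c)})\<^sup>+" by auto
      have la: "l = a \<or> (l, a) \<in> (I \<union> {(a, c)})\<^sup>+" using 2 by auto
      have ce: "e = c \<or> (c, e) \<in> (I \<union> {(a, c)})\<^sup>+" using 2 by auto
      have "(l, c) \<in> (I \<union> {(a, c)})\<^sup>+" using la ac' by (meson trancl_trans)
      then show ?thesis using ce 2 by (meson trancl_trans)
    qed
  qed
qed


lemma E_add:
  assumes t: "trans I" and W: "I \<subseteq> WF n" and ac: "a < c" and nac: "(a, c) \<notin> I"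
    and b: "b \<in> pm_set n" "a < b" "b < c" and w: "wit lab I a b c" and ij: "i \<le> j"
  shows "Erel n lab i j ((I \<union> {(a, c)})\<^sup>+) \<longleftrightarrow> Erel n lab i j I"
proof -
  define N where "N = (I \<union> {(a, c)})\<^sup>+"
  have N: "N = I \<union> {(l, e). (l = a \<or> (l, a) \<in> I) \<and> (e = c \<or> (c, e) \<in> I)}"
    using trancl_add[OF t W ac] by (simp add: N_def)
  have lt: "(u, v) \<in> I \<Longrightarrow> u < v" for u v using W by (auto simp: WF_def)
  have tr: "(u, v) \<in> I \<Longrightarrow> (v, z) \<in> I \<Longrightarrow> (u, z) \<in> I" for u v z using t by (meson transD)
  have "Erel n lab i j N \<longleftrightarrow> Erel n lab i j I"
  proof (rule E_change[OF _ ij])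
    show "I \<subseteq> N" using N by auto
  next
    fix l e assume le: "(l, e) \<in> N" "(l, e) \<notin> I"
    then have A: "l = a \<or> (l, a) \<in> I" and C: "e = c \<or> (c, e) \<in> I" using N by auto
    have lb: "l < b" using A lt b(2) by force
    have be: "b < e" using C lt b(3) by force
    have notA_b: "\<not> (b = a \<or> (b, a) \<in> I)" using b(2) lt by force
    have notC_b: "\<not> (b = c \<or> (c, b) \<in> I)" using b(3) lt by force
    show "\<exists>b \<in> pm_set n. l < b \<and> b < e \<and>
       ((lab b \<and> (l, b) \<in> I \<and> (b, e) \<notin> N) \<or> (\<not> lab b \<and> (l, b) \<notin> N \<and> (b, e) \<in> I))"
    proof (cases "lab b")
      case True
      then have ab: "(a, b) \<in> I" "(b, c) \<notin> I" using w by (auto simp: wit_def)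
      have "(l, b) \<in> I" using A ab tr by blast
      moreover have "(b, e) \<notin> I"
      proof
        assume "(b, e) \<in> I"
        then have "(a, e) \<in> I" using ab tr by blast
        then have "(l, e) \<in> I" using A tr by blast
        then show False using le by simp
      qed
      then have "(b, e) \<notin> N" using N notA_b by auto
      ultimately show ?thesis using True b(1) lb be by blast
    next
      case False
      then have ab: "(a, b) \<notin> I" "(b, c) \<in> I" using w by (auto simp: wit_def)
      have "(l, b) \<notin> I"
      proof
        assume "(l, b) \<in> I"
        then have "(l, c) \<in> I" using ab tr by blast
        then have "(l, e) \<in> I" using C tr by blast
        then show False using le by simp
      qed
      then have "(l, b) \<notin> N" using N notC_b A ab(1) by auto
      moreover have "(b, e) \<in> I" using C ab tr by blast
      ultimately show ?thesis using False b(1) lb be by blast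
    qed
  qed
  then show ?thesis by (simp add: N_def)
qed

lemma E_add2:
  assumes t: "trans I" and W: "I \<subseteq> WF n" and s: "symr I"
    and labs: "\<And>u. u \<in> pm_set n \<Longrightarrow> lab (- u) = (\<not> lab u)"
    and acV: "a \<in> pm_set n" "c \<in> pm_set n" and ac: "a < c" and nm: "c \<noteq> - a" and nac: "(a, c) \<notin> I"
    and b: "b \<in> pm_set n" "a < b" "b < c" and w: "wit lab I a b c" and ij: "i \<le> j"
  shows "Erel n lab i j ((I \<union> {(a, c), (- c, - a)})\<^sup>+) \<longleftrightarrow> Erel n lab i j I"
proof -
  define I1 where "I1 = (I \<union> {(a, c)})\<^sup>+"
  have N: "I1 = I \<union> {(l, e). (l = a \<or> (l, a) \<in> I) \<and> (e = c \<or> (c, e) \<in> I)}"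
    using trancl_add[OF t W ac] by (simp add: I1_def)
  have lt: "(u, v) \<in> I \<Longrightarrow> u < v" for u v using W by (auto simp: WF_def)
  have sI: "(u, v) \<in> I \<longleftrightarrow> (- v, - u) \<in> I" for u v using s unfolding symr_def by (metis minus_minus)
  have E1: "Erel n lab i j I1 \<longleftrightarrow> Erel n lab i j I" using E_add[OF t W ac nac b w ij] by (simp add: I1_def)
  have t1: "trans I1" by (simp add: I1_def)
  have W1: "I1 \<subseteq> WF n" unfolding I1_def using W acV ac by (intro trancl_WF) (auto simp: WF_def)
  have ca: "- c < - a" using ac by simp
  have nca: "(- c, - a) \<notin> I1"
  proof -
    have "(- c, - a) \<notin> I" using nac sI by simp
    moreover have "\<not> ((- c = a \<or> (- c, a) \<in> I) \<and> (- a = c \<or> (c, - a) \<in> I))"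
    proof
      assume h: "(- c = a \<or> (- c, a) \<in> I) \<and> (- a = c \<or> (c, - a) \<in> I)"
      then have "- c \<le> a" using lt by force
      moreover have "c \<le> - a" using h lt by force
      ultimately show False using nm by simp
    qed
    ultimately show ?thesis using N by auto
  qed
  have bV: "- b \<in> pm_set n" using b(1) by (auto simp: pm_set_iff)
  have w1: "wit lab I1 (- c) (- b) (- a)"
  proof (cases "lab b")
    case True
    then have ab: "(a, b) \<in> I" "(b, c) \<notin> I" using w by (auto simp: wit_def)
    have nl: "\<not> lab (- b)" using labs[OF b(1)] True by simp
    have "(- b, - a) \<in> I1" using ab(1) sI N by auto
    moreover have "(- c, - b) \<notin> I1"
    proof -
      have "(- c, - b) \<notin> I" using ab(2) sI by simp
      moreover have "\<not> ((- c = a \<or> (- c, a) \<in> I) \<and> (- b = c \<or> (c, - b) \<in> I))"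
      proof
        assume h: "(- c = a \<or> (- c, a) \<in> I) \<and> (- b = c \<or> (c, - b) \<in> I)"
        then have "- c \<le> a" using lt by force
        moreover have "c \<le> - b" using h lt by force
        ultimately show False using b(2,3) by simp
      qed
      ultimately show ?thesis using N by auto
    qed
    ultimately show ?thesis using nl by (simp add: wit_def)
  next
    case False
    then have ab: "(a, b) \<notin> I" "(b, c) \<in> I" using w by (auto simp: wit_def)
    have nl: "lab (- b)" using labs[OF b(1)] False by simp
    have "(- c, - b) \<in> I1" using ab(2) sI N by auto
    moreover have "(- b, - a) \<notin> I1"
    proof -
      have "(- b, - a) \<notin> I" using ab(1) sI by simp
      moreover have "\<not> ((- b = a \<or> (- b, a) \<in> I) \<and> (- a = c \<or> (c, - a) \<in> I))"
      proof
        assume h: "(- b = a \<or> (- b, a) \<in> I) \<and> (- a = c \<or> (c, - a) \<in> I)"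
        then have "- b \<le> a" using lt by force
        moreover have "c \<le> - a" using h lt by force
        ultimately show False using b(2,3) by simp
      qed
      ultimately show ?thesis using N by auto
    qed
    ultimately show ?thesis using nl by (simp add: wit_def)
  qed
  have b1: "- c < - b" "- b < - a" using b by auto
  have E2: "Erel n lab i j ((I1 \<union> {(- c, - a)})\<^sup>+) \<longleftrightarrow> Erel n lab i j I1"
    using E_add[OF t1 W1 ca nca bV b1 w1 ij] .
  have "(I1 \<union> {(- c, - a)})\<^sup>+ = (I \<union> {(a, c), (- c, - a)})\<^sup>+"
    unfolding I1_def trancl_trancl_Un by (simp add: insert_commute)
  then show ?thesis using E1 E2 by simp
qed


definition mp :: "(int \<Rightarrow> int) \<Rightarrow> nat \<Rightarrow> int \<times> int" where
  "mp x i = (if i = 0 then (- \<bar>x 1\<bar>, \<bar>x 1\<bar>) else (min (x i) (x (int i + 1)), max (x i) (x (int i + 1))))"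

lemma Oset_mp:
  assumes x: "x \<in> signed_perms n" and i: "i < n" and e: "mp x i = (a, c)"
  shows "Oset n x i = {(a, c), (- c, - a)}"
proof
  show "Oset n x i \<subseteq> {(a, c), (- c, - a)}"
  proof
    fix p assume p: "p \<in> Oset n x i"
    obtain u v where uv: "p = (u, v)" by fastforce
    show "p \<in> {(a, c), (- c, - a)}"
      using Oset_cases[OF x i, of u v] p uv e by (auto simp: mp_def split: if_splits)
  qed
next
  show "{(a, c), (- c, - a)} \<subseteq> Oset n x i"
  proof (cases "i = 0")
    case True
    then show ?thesis using Oset_elems(1)[OF x i] e by (auto simp: mp_def)
  next
    case False
    then show ?thesis using Oset_elems(2,3)[OF x i] e by (auto simp: mp_def)
  qed
qed

lemma mp_props:
  assumes x: "x \<in> signed_perms n" and i: "i < n" and e: "mp x i = (a, c)"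
  shows "a \<in> pm_set n" "c \<in> pm_set n" "a < c" "i = 0 \<longleftrightarrow> c = - a"
proof -
  have "(a, c) \<in> Oset n x i" using Oset_mp[OF x i e] by auto
  then show "a \<in> pm_set n" "c \<in> pm_set n" "a < c" by (auto simp: Oset_def)
  show "i = 0 \<longleftrightarrow> c = - a"
  proof (cases "i = 0")
    case True then show ?thesis using e by (auto simp: mp_def)
  next
    case False
    have "x (int i) \<noteq> - x (int i + 1)" using sp_facts[OF x _ i] False by auto
    then show ?thesis using e False by (auto simp: mp_def min_def max_def split: if_splits)
  qed
qed

lemma swp_gen: assumes "swp i p q" shows "cox_gen i p = q \<and> cox_gen i q = p"
proof -
  consider "i = 0" "p = -1" "q = 1" | "i > 0" "p = int i" "q = int i + 1" | "i > 0" "p = - int i - 1" "q = - int i"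
    using assms unfolding swp_def by blast
  then show ?thesis by cases (simp_all add: cox_gen_def)
qed

lemma Oset_comp:
  assumes x: "x \<in> signed_perms n" and i: "i < n"
  shows "Oset n (x \<circ> cox_gen i) i = Oset n x i"
proof -
  have x': "x \<circ> cox_gen i \<in> signed_perms n" using x i by (simp add: sp_comp cox_gen_sp)
  show ?thesis
  proof (intro set_eqI)
    fix ab :: "int \<times> int"
    obtain a b where e: "ab = (a, b)" by fastforce
    have "(\<exists>p q. swp i p q \<and> ((a = (x \<circ> cox_gen i) p \<and> b = (x \<circ> cox_gen i) q) \<or> (a = (x \<circ> cox_gen i) q \<and> b = (x \<circ> cox_gen i) p)))
      \<longleftrightarrow> (\<exists>p q. swp i p q \<and> ((a = x p \<and> b = x q) \<or> (a = x q \<and> b = x p)))"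
    proof -
      have key: "((a = (x \<circ> cox_gen i) p \<and> b = (x \<circ> cox_gen i) q) \<or> (a = (x \<circ> cox_gen i) q \<and> b = (x \<circ> cox_gen i) p))
          = ((a = x p \<and> b = x q) \<or> (a = x q \<and> b = x p))" if "swp i p q" for p q
        using swp_gen[OF that] by auto
      show ?thesis
      proof
        assume "\<exists>p q. swp i p q \<and> ((a = (x \<circ> cox_gen i) p \<and> b = (x \<circ> cox_gen i) q) \<or> (a = (x \<circ> cox_gen i) q \<and> b = (x \<circ> cox_gen i) p))"
        then obtain p q where "swp i p q" "((a = (x \<circ> cox_gen i) p \<and> b = (x \<circ> cox_gen i) q) \<or> (a = (x \<circ> cox_gen i) q \<and> b = (x \<circ> cox_gen i) p))"
          by blast
        then show "\<exists>p q. swp i p q \<and> ((a = x p \<and> b = x q) \<or> (a = x q \<and> b = x p))" using key by blast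
      next
        assume "\<exists>p q. swp i p q \<and> ((a = x p \<and> b = x q) \<or> (a = x q \<and> b = x p))"
        then obtain p q where "swp i p q" "((a = x p \<and> b = x q) \<or> (a = x q \<and> b = x p))"
          by blast
        then show "\<exists>p q. swp i p q \<and> ((a = (x \<circ> cox_gen i) p \<and> b = (x \<circ> cox_gen i) q) \<or> (a = (x \<circ> cox_gen i) q \<and> b = (x \<circ> cox_gen i) p))"
          using key by blast
      qed
    qed
    then show "ab \<in> Oset n (x \<circ> cox_gen i) i \<longleftrightarrow> ab \<in> Oset n x i"
      using Oset_mem[OF x' i, of a b] Oset_mem[OF x i, of a b] e by simp
  qed
qed

lemma mp_comp:
  assumes x: "x \<in> signed_perms n" and i: "i < n"
  shows "mp (x \<circ> cox_gen i) i = mp x i"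
proof (cases "i = 0")
  case True
  have "\<bar>x (- 1)\<bar> = \<bar>x 1\<bar>" using sp_facts0[OF x] i True by simp
  then show ?thesis using True by (simp add: mp_def cox_gen_def)
next
  case False
  then show ?thesis by (auto simp: mp_def cox_gen_def min_def max_def)
qed

lemma befR_Inv:
  assumes x: "x \<in> signed_perms n" and pq: "p \<in> pm_set n" "q \<in> pm_set n" "p \<noteq> q"
  shows "befR (Inv n x) p q \<longleftrightarrow> inv x p < inv x q"
proof -
  have "inv x p \<noteq> inv x q"
  proof
    assume "inv x p = inv x q"
    then have "x (inv x p) = x (inv x q)" by simp
    then show False using pq sp_inv2[OF x] by simp
  qed
  then show ?thesis using pq by (auto simp: befR_def Inv_def)
qed

lemma wit_mono:
  assumes w: "wit lab I a b c" and sub: "I \<subseteq> I'" and t: "trans I'" and nac: "(a, c) \<notin> I'"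
  shows "wit lab I' a b c"
proof (cases "lab b")
  case True
  then have "(a, b) \<in> I" "(b, c) \<notin> I" using w by (auto simp: wit_def)
  moreover have "(b, c) \<notin> I'"
  proof
    assume "(b, c) \<in> I'"
    then have "(a, c) \<in> I'" using \<open>(a, b) \<in> I\<close> sub t by (meson subsetD transD)
    then show False using nac by simp
  qed
  ultimately show ?thesis using True sub by (auto simp: wit_def)
next
  case False
  then have "(a, b) \<notin> I" "(b, c) \<in> I" using w by (auto simp: wit_def)
  moreover have "(a, b) \<notin> I'"
  proof
    assume "(a, b) \<in> I'"
    then have "(a, c) \<in> I'" using \<open>(b, c) \<in> I\<close> sub t by (meson subsetD transD)
    then show False using nac by simp
  qed
  ultimately show ?thesis using False sub by (auto simp: wit_def)
qed

lemma step_E: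
  assumes t: "trans I" and W: "I \<subseteq> WF n" and s: "symr I"
    and labs: "\<And>u. u \<in> pm_set n \<Longrightarrow> lab (- u) = (\<not> lab u)"
    and u: "u \<in> signed_perms n" and i: "i < n" and sub: "Inv n u \<subseteq> I"
    and e: "mp u i = (a, c)" and b: "b \<in> pm_set n" "a < b" "b < c" and w: "wit lab (Inv n u) a b c"
    and ij: "i' \<le> j'"
  shows "Erel n lab i' j' ((I \<union> Oset n u i)\<^sup>+) \<longleftrightarrow> Erel n lab i' j' I"
proof -
  have O: "Oset n u i = {(a, c), (- c, - a)}" using Oset_mp[OF u i e] .
  note mpp = mp_props[OF u i e]
  show ?thesis
  proof (cases "(a, c) \<in> I")
    case True
    then have "(- c, - a) \<in> I" using s by (auto simp: symr_def)
    then have "Oset n u i \<subseteq> I" using O True by auto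
    then have "(I \<union> Oset n u i)\<^sup>+ = I" using trancl_id[OF t] by (simp add: sup.absorb1)
    then show ?thesis by simp
  next
    case False
    have w': "wit lab I a b c" using wit_mono[OF w sub t False] .
    show ?thesis
    proof (cases "i = 0")
      case True
      then have "c = - a" using mpp by simp
      then have "Oset n u i = {(a, c)}" using O by auto
      then show ?thesis using E_add[OF t W mpp(3) False b w' ij] by simp
    next
      case i0: False
      then have "c \<noteq> - a" using mpp by simp
      then show ?thesis using E_add2[OF t W s labs mpp(1-3) _ False b w' ij] O by simp
    qed
  qed
qed


lemma nowit_diag:
  fixes lab :: "int \<Rightarrow> bool"
  assumes x: "x \<in> signed_perms n" and v: "v1 \<in> pm_set n" "v2 \<in> pm_set n"
    and pos: "inv x v1 < inv x v2"
    and adj: "\<And>l. l \<in> pm_set n \<Longrightarrow> \<not> (inv x v1 < inv x l \<and> inv x l < inv x v2)"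
    and nw: "\<And>b. b \<in> pm_set n \<Longrightarrow> min v1 v2 < b \<Longrightarrow> b < max v1 v2 \<Longrightarrow>
       \<not> ((lab b \<and> inv x b < inv x v1) \<or> (\<not> lab b \<and> inv x v2 < inv x b))"
  shows "\<exists>i j. i < j \<and> i \<in> pm_set (Suc n) \<and> j \<in> pm_set (Suc n) \<and> v1 \<in> Dset n lab i j \<and>
     v2 \<in> Uset n lab i j \<and> Erel n lab i j (Inv n x)"
proof -
  define P where "P = inv x v1"
  define a where "a = min v1 v2"
  define c where "c = max v1 v2"
  have injx: "inv x l = inv x m \<Longrightarrow> l = m" for l m by (metis sp_inv2[OF x])
  have v12: "v1 \<noteq> v2" using pos by auto
  have ac: "a < c" using v12 by (simp add: a_def c_def min_def max_def)
  have aV: "a \<in> pm_set n" "c \<in> pm_set n" using v by (auto simp: a_def c_def min_def max_def)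
  define S where "S = {l \<in> pm_set n. (lab l \<and> inv x l \<le> P) \<or> (\<not> lab l \<and> P < inv x l)}"
  define L where "L = {l. (l \<in> S \<or> l = - int n - 1) \<and> l \<le> a}"
  define R where "R = {l. (l \<in> S \<or> l = int n + 1) \<and> c \<le> l}"
  have SV: "S \<subseteq> pm_set n" by (auto simp: S_def)
  have box: "pm_set n \<subseteq> {- int n - 1..int n + 1}" by (auto simp: pm_set_iff)
  have finL: "finite L" by (rule finite_subset[of _ "{- int n - 1..int n + 1}"]) (use SV box in \<open>auto simp: L_def\<close>)
  have finR: "finite R" by (rule finite_subset[of _ "{- int n - 1..int n + 1}"]) (use SV box in \<open>auto simp: R_def\<close>)
  have aR: "- int n - 1 \<in> L" using aV by (auto simp: L_def pm_set_iff)
  have cR: "int n + 1 \<in> R" using aV by (auto simp: R_def pm_set_iff)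
  define i where "i = Max L"
  define j where "j = Min R"
  have iL: "i \<in> L" using Max_in[OF finL] aR by (auto simp: i_def)
  have jR: "j \<in> R" using Min_in[OF finR] cR by (auto simp: j_def)
  have imax: "l \<in> L \<Longrightarrow> l \<le> i" for l using Max_ge[OF finL] by (simp add: i_def)
  have jmin: "l \<in> R \<Longrightarrow> j \<le> l" for l using Min_le[OF finR] by (simp add: j_def)
  have ia: "i \<le> a" using iL by (simp add: L_def)
  have cj: "c \<le> j" using jR by (simp add: R_def)
  have iS: "i \<in> S \<or> i = - int n - 1" using iL by (simp add: L_def)
  have jS: "j \<in> S \<or> j = int n + 1" using jR by (simp add: R_def)
  have iV: "i \<in> pm_set (Suc n)" using iS SV by (auto simp: pm_set_iff)
  have jV: "j \<in> pm_set (Suc n)" using jS SV by (auto simp: pm_set_iff)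
  have endS: "l \<in> pm_set n \<Longrightarrow> (l = i \<or> l = j) \<Longrightarrow> l \<in> S" for l
    using iS jS by (auto simp: pm_set_iff)
  have notS: "l \<notin> S" if l: "l \<in> pm_set n" "i < l" "l < j" for l
  proof
    assume lS: "l \<in> S"
    consider "l \<le> a" | "c \<le> l" | "a < l" "l < c" by linarith
    then show False
    proof cases
      case 1 then have "l \<in> L" using lS by (simp add: L_def)
      then show False using imax l by fastforce
    next
      case 2 then have "l \<in> R" using lS by (simp add: R_def)
      then show False using jmin l by fastforce
    next
      case 3
      then have lv: "l \<noteq> v1" "l \<noteq> v2" using a_def c_def by auto
      have nwl: "\<not> ((lab l \<and> inv x l < inv x v1) \<or> (\<not> lab l \<and> inv x v2 < inv x l))"
        using nw[OF l(1)] 3 by (simp add: a_def c_def)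
      have "inv x l \<noteq> P" using lv injx by (auto simp: P_def)
      moreover have "inv x l \<noteq> inv x v2" using lv injx by auto
      moreover have "\<not> (P < inv x l \<and> inv x l < inv x v2)" using adj[OF l(1)] by (simp add: P_def)
      ultimately show False using lS nwl by (auto simp: S_def P_def)
    qed
  qed
  have Dle: "inv x p \<le> P" if p: "p \<in> Dset n lab i j" for p
  proof -
    have pV: "p \<in> pm_set n" using p by (simp add: Dset_def)
    from p consider "i < p" "p < j" "\<not> lab p" | "p = i \<or> p = j" "lab p" by (auto simp: Dset_def)
    then show ?thesis
    proof cases
      case 1 then show ?thesis using notS[OF pV] by (auto simp: S_def pV)
    next
      case 2 then show ?thesis using endS[OF pV] by (auto simp: S_def)
    qed
  qed
  have Ugt: "P < inv x q" if q: "q \<in> Uset n lab i j" for q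
  proof -
    have qV: "q \<in> pm_set n" using q by (simp add: Uset_def)
    from q consider "i < q" "q < j" "lab q" | "q = i \<or> q = j" "\<not> lab q" by (auto simp: Uset_def)
    then show ?thesis
    proof cases
      case 1 then show ?thesis using notS[OF qV] by (auto simp: S_def qV)
    next
      case 2 then show ?thesis using endS[OF qV] by (auto simp: S_def)
    qed
  qed
  have E: "Erel n lab i j (Inv n x)" unfolding Erel_def
  proof (intro ballI)
    fix p q assume p: "p \<in> Dset n lab i j" and q: "q \<in> Uset n lab i j"
    have "inv x p < inv x q" using Dle[OF p] Ugt[OF q] by simp
    moreover have "p \<noteq> q" using calculation by auto
    ultimately show "befR (Inv n x) p q"
      using befR_Inv[OF x] p q by (auto simp: Dset_def Uset_def)
  qed
  have rng: "i \<le> v1" "v1 \<le> j" "i \<le> v2" "v2 \<le> j" using ia cj by (auto simp: a_def c_def)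
  have D1: "v1 \<in> Dset n lab i j"
  proof (cases "v1 = i \<or> v1 = j")
    case True
    then have "v1 \<in> S" using endS v by blast
    then have "lab v1" by (auto simp: S_def P_def)
    then show ?thesis using True v by (auto simp: Dset_def)
  next
    case False
    then have "i < v1" "v1 < j" using rng by auto
    then have "v1 \<notin> S" using notS v by blast
    then have "\<not> lab v1" using v by (auto simp: S_def P_def)
    then show ?thesis using \<open>i < v1\<close> \<open>v1 < j\<close> v by (auto simp: Dset_def)
  qed
  have U2: "v2 \<in> Uset n lab i j"
  proof (cases "v2 = i \<or> v2 = j")
    case True
    then have "v2 \<in> S" using endS v by blast
    then have "\<not> lab v2" using pos by (auto simp: S_def P_def)
    then show ?thesis using True v by (auto simp: Uset_def)
  next
    case False
    then have "i < v2" "v2 < j" using rng by auto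
    then have "v2 \<notin> S" using notS v by blast
    then have "lab v2" using v pos by (auto simp: S_def P_def)
    then show ?thesis using \<open>i < v2\<close> \<open>v2 < j\<close> v by (auto simp: Uset_def)
  qed
  have "i < j" using ia cj ac by simp
  then show ?thesis using iV jV D1 U2 E by blast
qed


section \<open>Compatibility with joins\<close>

definition ThetaR :: "nat \<Rightarrow> (int \<Rightarrow> bool) \<Rightarrow> (int set \<Rightarrow> bool) \<Rightarrow> (int \<Rightarrow> int) \<Rightarrow> (int \<Rightarrow> int) \<Rightarrow> bool" where
  "ThetaR n lab diag x y \<longleftrightarrow> (\<forall>i j. i < j \<longrightarrow> i \<in> pm_set (Suc n) \<longrightarrow> j \<in> pm_set (Suc n) \<longrightarrow>
      diag {i, j} \<longrightarrow> (Erel n lab i j (Inv n x) \<longleftrightarrow> Erel n lab i j (Inv n y)))"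

lemma gen_step_exists:
  assumes x: "x \<in> signed_perms n" and y: "y \<in> signed_perms n" and ne: "x \<noteq> y"
  shows "\<exists>i<n. inv y (x (sb i)) < inv y (x (sa i))"
proof (rule ccontr)
  assume h: "\<not> (\<exists>i<n. inv y (x (sb i)) < inv y (x (sa i)))"
  define g where "g = inv y \<circ> x"
  have g: "g \<in> signed_perms n" unfolding g_def using sp_inv_sp[OF y] x by (rule sp_comp)
  have "\<not> desc g i" if i: "i < n" for i
  proof (cases "i = 0")
    case True
    have "\<not> inv y (x 1) < inv y (x (-1))" using h i True by (auto simp: sa_def sb_def)
    moreover have "inv y (x (-1)) = - inv y (x 1)" using sp_odd[OF x] sp_odd[OF sp_inv_sp[OF y]] by simp
    ultimately show ?thesis using True by (simp add: desc_def g_def)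
  next
    case False
    then show ?thesis using h i by (auto simp: desc_def g_def sa_def sb_def)
  qed
  then have "g = id" using no_desc_id[OF g] by blast
  then have "y \<circ> g = y" by simp
  moreover have "y \<circ> g = x" unfolding g_def by (simp add: fun_eq_iff sp_inv2[OF y])
  ultimately show False using ne by simp
qed

lemma mp_pos:
  assumes x: "x \<in> signed_perms n" and i: "i < n" and e: "mp x i = (a, c)"
  shows "(a = x (sa i) \<and> c = x (sb i)) \<or> (a = x (sb i) \<and> c = x (sa i))"
proof (cases "i = 0")
  case True
  have f: "x (- 1) = - x 1" using sp_facts0[OF x] i True by auto
  then show ?thesis using e True by (auto simp: mp_def sa_def sb_def abs_if)
next
  case False
  then show ?thesis using e by (auto simp: mp_def sa_def sb_def min_def max_def split: if_splits)
qed

lemma pos_wit: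
  assumes x: "x \<in> signed_perms n" and i: "i < n" and e: "mp x i = (a, c)"
    and b: "b \<in> pm_set n" "a < b" "b < c"
    and pw: "(lab b \<and> inv x b < sa i) \<or> (\<not> lab b \<and> sb i < inv x b)"
  shows "wit lab (Inv n x) a b c"
proof -
  have ac: "a \<in> pm_set n" "c \<in> pm_set n" using mp_props[OF x i e] by auto
  have ss: "sa i < sb i" using sa_sb_in[OF i] by simp
  have ia: "inv x (x (sa i)) = sa i" "inv x (x (sb i)) = sb i" using sp_inv1[OF x] by auto
  have pa: "(inv x a = sa i \<and> inv x c = sb i) \<or> (inv x a = sb i \<and> inv x c = sa i)"
    using mp_pos[OF x i e] ia by auto
  show ?thesis using pw pa ss b ac by (auto simp: wit_def Inv_def)
qed

lemma wit_comp:
  assumes x: "x \<in> signed_perms n" and i: "i < n" and e: "mp x i = (a, c)"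
    and b: "a < b" "b < c"
  shows "wit lab (Inv n (x \<circ> cox_gen i)) a b c \<longleftrightarrow> wit lab (Inv n x) a b c"
proof -
  have O: "Oset n x i = {(a, c), (- c, - a)}" using Oset_mp[OF x i e] .
  have "(a, b) \<notin> Oset n x i" "(b, c) \<notin> Oset n x i" using O b by auto
  then show ?thesis using Inv_swap[OF x i, of a b] Inv_swap[OF x i, of b c] by (auto simp: wit_def)
qed

lemma join_step:
  assumes labs: "\<And>u. u \<in> pm_set n \<Longrightarrow> lab (- u) = (\<not> lab u)"
    and u: "u \<in> signed_perms n" and z: "z \<in> signed_perms n" and i: "i < n" and nd: "\<not> desc u i"
    and e: "mp u i = (a, c)" and b: "b \<in> pm_set n" "a < b" "b < c" and w: "wit lab (Inv n u) a b c"
    and ij: "i' \<le> j'"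
  shows "Erel n lab i' j' ((Inv n (u \<circ> cox_gen i) \<union> Inv n z)\<^sup>+) \<longleftrightarrow> Erel n lab i' j' ((Inv n u \<union> Inv n z)\<^sup>+)"
proof -
  define I where "I = (Inv n u \<union> Inv n z)\<^sup>+"
  have t: "trans I" by (simp add: I_def)
  have W: "I \<subseteq> WF n" unfolding I_def using Inv_WF by (intro trancl_WF) auto
  have s: "symr I" unfolding I_def using Inv_symr[OF u] Inv_symr[OF z] by (intro trancl_symr symr_Un)
  have sub: "Inv n u \<subseteq> I" by (auto simp: I_def)
  have "(Inv n (u \<circ> cox_gen i) \<union> Inv n z)\<^sup>+ = (Inv n u \<union> Inv n z \<union> Oset n u i)\<^sup>+"
    using Inv_asc[OF u i nd] by (simp add: Un_ac)
  also have "\<dots> = (I \<union> Oset n u i)\<^sup>+" unfolding I_def by (rule trancl_trancl_Un[symmetric])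
  finally have eq: "(Inv n (u \<circ> cox_gen i) \<union> Inv n z)\<^sup>+ = (I \<union> Oset n u i)\<^sup>+" .
  show ?thesis using step_E[OF t W s labs u i sub e b w ij] eq by (simp add: I_def)
qed

lemma Inv_trancl_self: "(Inv n x)\<^sup>+ = Inv n x"
  using Inv_trans by (rule trancl_id)

lemma swap_E:
  assumes labs: "\<And>u. u \<in> pm_set n \<Longrightarrow> lab (- u) = (\<not> lab u)"
    and x: "x \<in> signed_perms n" and z: "z \<in> signed_perms n" and i: "i < n"
    and e: "mp x i = (a, c)" and b: "b \<in> pm_set n" "a < b" "b < c" and w: "wit lab (Inv n x) a b c"
    and ij: "i' \<le> j'"
  shows "Erel n lab i' j' ((Inv n (x \<circ> cox_gen i) \<union> Inv n z)\<^sup>+) \<longleftrightarrow> Erel n lab i' j' ((Inv n x \<union> Inv n z)\<^sup>+)"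
proof (cases "desc x i")
  case False
  show ?thesis using join_step[OF labs x z i False e b w ij] .
next
  case True
  define x' where "x' = x \<circ> cox_gen i"
  have x': "x' \<in> signed_perms n" using x i by (simp add: x'_def sp_comp cox_gen_sp)
  have xx: "x' \<circ> cox_gen i = x" by (simp add: x'_def comp_gen_gen)
  have e': "mp x' i = (a, c)" using mp_comp[OF x i] e by (simp add: x'_def)
  have w': "wit lab (Inv n x') a b c" using wit_comp[OF x i e b(2,3)] w by (simp add: x'_def)
  have O: "Oset n x' i = Oset n x i" using Oset_comp[OF x i] by (simp add: x'_def)
  have nd: "\<not> desc x' i"
  proof
    assume d: "desc x' i"
    have "(a, c) \<in> Oset n x i" using Oset_mp[OF x i e] by auto
    then have "(a, c) \<in> Inv n x'" using Oset_Inv[OF x' i] O d by auto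
    moreover have "(a, c) \<in> Inv n x" using Oset_Inv[OF x i] True \<open>(a, c) \<in> Oset n x i\<close> by auto
    ultimately show False using Inv_swap[OF x i, of a c] \<open>(a, c) \<in> Oset n x i\<close> by (simp add: x'_def)
  qed
  show ?thesis using join_step[OF labs x' z i nd e' b w' ij] xx by (simp add: x'_def)
qed


lemma sa_sb_adj: "i < n \<Longrightarrow> l \<in> pm_set n \<Longrightarrow> \<not> (sa i < l \<and> l < sb i)"
  by (auto simp: sa_def sb_def pm_set_iff)

lemma join_compat_aux:
  assumes labs: "\<And>u. u \<in> pm_set n \<Longrightarrow> lab (- u) = (\<not> lab u)"
    and Hd: "\<And>i j. i < j \<Longrightarrow> i \<in> pm_set (Suc n) \<Longrightarrow> j \<in> pm_set (Suc n) \<Longrightarrow>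
       Dset n lab i j \<noteq> {} \<Longrightarrow> Uset n lab i j \<noteq> {} \<Longrightarrow> diag {i, j}"
    and z: "z \<in> signed_perms n" and y: "y \<in> signed_perms n"
  shows "x \<in> signed_perms n \<Longrightarrow> ThetaR n lab diag x y \<Longrightarrow> card (Inv n x - Inv n y \<union> (Inv n y - Inv n x)) = k \<Longrightarrow>
    i' \<le> j' \<Longrightarrow> Erel n lab i' j' ((Inv n x \<union> Inv n z)\<^sup>+) \<longleftrightarrow> Erel n lab i' j' ((Inv n y \<union> Inv n z)\<^sup>+)"
proof (induction k arbitrary: x rule: less_induct)
  case (less k)
  note x = less.prems(1) and Th = less.prems(2)
  show ?case
  proof (cases "x = y")
    case True then show ?thesis by simp
  next
    case False
    obtain i where i: "i < n" "inv y (x (sb i)) < inv y (x (sa i))"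
      using gen_step_exists[OF x y False] by blast
    define v1 where "v1 = x (sa i)"
    define v2 where "v2 = x (sb i)"
    obtain a c where e: "mp x i = (a, c)" by fastforce
    have ac: "(a = v1 \<and> c = v2) \<or> (a = v2 \<and> c = v1)" using mp_pos[OF x i(1) e] by (auto simp: v1_def v2_def)
    note mpp = mp_props[OF x i(1) e]
    have vV: "v1 \<in> pm_set n" "v2 \<in> pm_set n" using sa_sb_in[OF i(1)] sp_in[OF x] by (auto simp: v1_def v2_def)
    have iv: "inv x v1 = sa i" "inv x v2 = sb i" using sp_inv1[OF x] by (auto simp: v1_def v2_def)
    have pos: "inv x v1 < inv x v2" using iv sa_sb_in[OF i(1)] by simp
    have mm: "min v1 v2 = a" "max v1 v2 = c" using ac mpp(3) by auto
    have yv: "inv y v2 < inv y v1" using i(2) by (simp add: v1_def v2_def)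
    have "\<exists>b \<in> pm_set n. a < b \<and> b < c \<and> ((lab b \<and> inv x b < inv x v1) \<or> (\<not> lab b \<and> inv x v2 < inv x b))"
    proof (rule ccontr)
      assume nw: "\<not> ?thesis"
      have adj: "\<not> (inv x v1 < inv x l \<and> inv x l < inv x v2)" if "l \<in> pm_set n" for l
        using sa_sb_adj[OF i(1), of "inv x l"] iv sp_in[OF sp_inv_sp[OF x]] that by simp
      obtain i1 j1 where ij: "i1 < j1" "i1 \<in> pm_set (Suc n)" "j1 \<in> pm_set (Suc n)"
        "v1 \<in> Dset n lab i1 j1" "v2 \<in> Uset n lab i1 j1" "Erel n lab i1 j1 (Inv n x)"
        using nowit_diag[OF x vV pos adj, of lab] nw mm by blast
      have "diag {i1, j1}" using Hd[OF ij(1-3)] ij(4,5) by blast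
      then have "Erel n lab i1 j1 (Inv n y)" using Th ij by (auto simp: ThetaR_def)
      then have "befR (Inv n y) v1 v2" using ij(4,5) by (auto simp: Erel_def)
      moreover have "v1 \<noteq> v2" using pos by auto
      ultimately have "inv y v1 < inv y v2" using befR_Inv[OF y vV] by simp
      then show False using yv by simp
    qed
    then obtain b where b: "b \<in> pm_set n" "a < b" "b < c"
      "(lab b \<and> inv x b < sa i) \<or> (\<not> lab b \<and> sb i < inv x b)" using iv by auto
    have w: "wit lab (Inv n x) a b c" using pos_wit[where lab=lab, OF x i(1) e b] .
    define x' where "x' = x \<circ> cox_gen i"
    have x': "x' \<in> signed_perms n" using x i by (simp add: x'_def sp_comp cox_gen_sp)
    have sw: "\<And>i1 j1 zz. zz \<in> signed_perms n \<Longrightarrow> i1 \<le> j1 \<Longrightarrow>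
       Erel n lab i1 j1 ((Inv n x' \<union> Inv n zz)\<^sup>+) \<longleftrightarrow> Erel n lab i1 j1 ((Inv n x \<union> Inv n zz)\<^sup>+)"
      using swap_E[OF labs x _ i(1) e b(1-3) w] by (simp add: x'_def)
    have selfE: "Erel n lab i1 j1 (Inv n x') \<longleftrightarrow> Erel n lab i1 j1 (Inv n x)" if "i1 \<le> j1" for i1 j1
      using sw[OF sp_id that] by (simp add: Inv_id Inv_trancl_self)
    have Th': "ThetaR n lab diag x' y" using Th selfE by (auto simp: ThetaR_def)
    have O: "Oset n x i = {(a, c), (- c, - a)}" using Oset_mp[OF x i(1) e] .
    have acD: "((a, c) \<in> Inv n x) \<noteq> ((a, c) \<in> Inv n y)"
    proof -
      have v12: "v1 \<noteq> v2" using pos by auto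
      have "inv x v1 < inv x v2" "\<not> inv y v1 < inv y v2" using pos yv by auto
      then show ?thesis using bef_Inv[OF x vV v12] bef_Inv[OF y vV v12] ac mpp(3) by (auto split: if_splits)
    qed
    have acD2: "((- c, - a) \<in> Inv n x) \<noteq> ((- c, - a) \<in> Inv n y)"
      using acD Inv_sym[OF x, of a c] Inv_sym[OF y, of a c] by simp
    define D where "D = Inv n x - Inv n y \<union> (Inv n y - Inv n x)"
    have Ix': "(p, q) \<in> Inv n x' \<longleftrightarrow> ((p, q) \<in> Inv n x) \<noteq> ((p, q) \<in> Oset n x i)" for p q
      using Inv_swap[OF x i(1)] by (simp add: x'_def)
    have D': "Inv n x' - Inv n y \<union> (Inv n y - Inv n x') = D - Oset n x i"
    proof (intro set_eqI)
      fix pq :: "int \<times> int"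
      obtain p q where pq: "pq = (p, q)" by fastforce
      have "(p, q) \<in> Oset n x i \<Longrightarrow> (p, q) \<in> D" using O acD acD2 by (auto simp: D_def)
      then show "pq \<in> Inv n x' - Inv n y \<union> (Inv n y - Inv n x') \<longleftrightarrow> pq \<in> D - Oset n x i"
        using Ix'[of p q] pq by (auto simp: D_def)
    qed
    have finD: "finite D" using finite_Inv by (simp add: D_def)
    have "(a, c) \<in> D \<inter> Oset n x i" using O acD by (auto simp: D_def)
    then have "D - Oset n x i \<subset> D" by blast
    then have "card (D - Oset n x i) < card D" using finD by (rule psubset_card_mono[rotated])
    then have lt: "card (Inv n x' - Inv n y \<union> (Inv n y - Inv n x')) < k" using D' less.prems(3) by (simp add: D_def)
    have "Erel n lab i' j' ((Inv n x' \<union> Inv n z)\<^sup>+) \<longleftrightarrow> Erel n lab i' j' ((Inv n y \<union> Inv n z)\<^sup>+)"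
      using less.IH[OF lt x' Th' refl less.prems(4)] .
    then show ?thesis using sw[OF z less.prems(4)] by simp
  qed
qed

theorem join_compat:
  assumes labs: "\<And>u. u \<in> pm_set n \<Longrightarrow> lab (- u) = (\<not> lab u)"
    and Hd: "\<And>i j. i < j \<Longrightarrow> i \<in> pm_set (Suc n) \<Longrightarrow> j \<in> pm_set (Suc n) \<Longrightarrow>
       Dset n lab i j \<noteq> {} \<Longrightarrow> Uset n lab i j \<noteq> {} \<Longrightarrow> diag {i, j}"
    and x: "x \<in> signed_perms n" and y: "y \<in> signed_perms n" and z: "z \<in> signed_perms n"
    and Th: "ThetaR n lab diag x y"
    and jx: "is_join (signed_perms n) (weak_le n) x z m1"
    and jy: "is_join (signed_perms n) (weak_le n) y z m2"
  shows "ThetaR n lab diag m1 m2"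
proof -
  have "Inv n m1 = (Inv n x \<union> Inv n z)\<^sup>+" using join_Inv[OF x z jx] .
  moreover have "Inv n m2 = (Inv n y \<union> Inv n z)\<^sup>+" using join_Inv[OF y z jy] .
  ultimately show ?thesis
    using join_compat_aux[OF labs Hd z y x Th refl] unfolding ThetaR_def by auto
qed


section \<open>Characterizing etaB\<close>

definition posn :: "nat \<Rightarrow> nat \<Rightarrow> int" where
  "posn n k = (if k < n then int k - int n else int k - int n + 1)"

definition rk :: "nat \<Rightarrow> (int \<Rightarrow> int) \<Rightarrow> int \<Rightarrow> int" where
  "rk n x l = (if inv x l < 0 then inv x l + int n else inv x l + int n - 1)"

lemma fn_nth:
  assumes k: "k < 2 * n"
  shows "full_notation n x ! k = x (posn n k)"
proof -
  have l1: "length [- int n..-1] = n" by simp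
  show ?thesis
  proof (cases "k < n")
    case True
    have "[- int n..-1] ! k = - int n + int k" using True by (intro nth_upto) simp
    then show ?thesis using True l1 by (simp add: full_notation_def nth_append posn_def)
  next
    case False
    have "[1..int n] ! (k - n) = 1 + int (k - n)" using False k by (intro nth_upto) simp
    moreover have "1 + int (k - n) = int k - int n + 1" using False by simp
    ultimately show ?thesis using False l1 k by (simp add: full_notation_def nth_append posn_def ac_simps)
  qed
qed

lemma posn_V: "k < 2 * n \<Longrightarrow> posn n k \<in> pm_set n"
  by (auto simp: posn_def pm_set_iff)

lemma rk_range:
  assumes x: "x \<in> signed_perms n" and l: "l \<in> pm_set n"
  shows "0 \<le> rk n x l \<and> rk n x l < 2 * int n"
proof -
  have "inv x l \<in> pm_set n" using sp_in[OF sp_inv_sp[OF x]] l by blast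
  then show ?thesis by (auto simp: rk_def pm_set_iff)
qed

lemma rk_mono:
  assumes x: "x \<in> signed_perms n" and pq: "p \<in> pm_set n" "q \<in> pm_set n"
  shows "rk n x p < rk n x q \<longleftrightarrow> inv x p < inv x q"
proof -
  have "inv x p \<in> pm_set n" "inv x q \<in> pm_set n" using sp_in[OF sp_inv_sp[OF x]] pq by blast+
  then show ?thesis by (auto simp: rk_def pm_set_iff)
qed

lemma rk_eq:
  assumes x: "x \<in> signed_perms n" and l: "l \<in> pm_set n" and k: "k < 2 * n"
  shows "rk n x l = int k \<longleftrightarrow> l = x (posn n k)"
proof -
  have il: "inv x l \<in> pm_set n" using sp_in[OF sp_inv_sp[OF x]] l by blast
  have "l = x (posn n k) \<longleftrightarrow> inv x l = posn n k" using sp_inv1[OF x] sp_inv2[OF x] by metis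
  also have "\<dots> \<longleftrightarrow> rk n x l = int k" using il k by (auto simp: rk_def posn_def pm_set_iff)
  finally show ?thesis by simp
qed

lemma lam_mem:
  assumes x: "x \<in> signed_perms n"
  shows "k \<le> 2 * n \<Longrightarrow> l \<in> lam_path n v x k \<longleftrightarrow>
    l = - int n - 1 \<or> l = int n + 1 \<or> (l \<in> pm_set n \<and> (is_up v l \<longleftrightarrow> rk n x l < int k))"
proof (induction k arbitrary: l)
  case 0
  have "l \<in> pm_set n \<Longrightarrow> 0 \<le> rk n x l" using rk_range[OF x] by blast
  then show ?case by auto
next
  case (Suc k)
  have k: "k < 2 * n" using Suc.prems by simp
  define y where "y = full_notation n x ! k"
  have y: "y = x (posn n k)" using fn_nth[OF k] by (simp add: y_def)
  have yV: "y \<in> pm_set n" using y posn_V[OF k] sp_in[OF x] by blast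
  have ryk: "rk n x y = int k" using rk_eq[OF x yV k] y by simp
  have IH: "l \<in> lam_path n v x k \<longleftrightarrow>
    l = - int n - 1 \<or> l = int n + 1 \<or> (l \<in> pm_set n \<and> (is_up v l \<longleftrightarrow> rk n x l < int k))"
    using Suc.IH Suc.prems by simp
  have ends: "y \<noteq> - int n - 1" "y \<noteq> int n + 1" using yV by (auto simp: pm_set_iff)
  show ?case
  proof (cases "l = y")
    case True
    then show ?thesis using ends yV ryk by (auto simp: Let_def y_def[symmetric])
  next
    case False
    have "l \<in> pm_set n \<Longrightarrow> rk n x l \<noteq> int k" using rk_eq[OF x _ k] False y by blast
    then have "l \<in> pm_set n \<Longrightarrow> (rk n x l < int (Suc k) \<longleftrightarrow> rk n x l < int k)" by auto
    then show ?thesis using IH False by (auto simp: Let_def y_def[symmetric])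
  qed
qed


lemma pe_iff:
  assumes "i < j"
  shows "{i, j} \<in> path_edges S \<longleftrightarrow> i \<in> S \<and> j \<in> S \<and> (\<forall>k\<in>S. \<not> (i < k \<and> k < j))"
proof
  assume "{i, j} \<in> path_edges S"
  then obtain i' j' where h: "{i, j} = {i', j'}" "i' \<in> S" "j' \<in> S" "i' < j'" "\<forall>k\<in>S. \<not> (i' < k \<and> k < j')"
    by (auto simp: path_edges_def)
  then have "i = i' \<and> j = j'" using assms by (auto simp: doubleton_eq_iff)
  then show "i \<in> S \<and> j \<in> S \<and> (\<forall>k\<in>S. \<not> (i < k \<and> k < j))" using h by auto
next
  assume "i \<in> S \<and> j \<in> S \<and> (\<forall>k\<in>S. \<not> (i < k \<and> k < j))"
  then show "{i, j} \<in> path_edges S" using assms by (auto simp: path_edges_def)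
qed

lemma edge_iff:
  assumes x: "x \<in> signed_perms n" and ij: "i < j" "i \<in> pm_set (Suc n)" "j \<in> pm_set (Suc n)"
  shows "(\<exists>k \<le> 2 * n. {i, j} \<in> path_edges (lam_path n v x k)) \<longleftrightarrow> Erel n (is_up v) i j (Inv n x)"
proof
  assume "\<exists>k \<le> 2 * n. {i, j} \<in> path_edges (lam_path n v x k)"
  then obtain k where k: "k \<le> 2 * n" "{i, j} \<in> path_edges (lam_path n v x k)" by blast
  have h: "i \<in> lam_path n v x k" "j \<in> lam_path n v x k" "\<forall>l \<in> lam_path n v x k. \<not> (i < l \<and> l < j)"
    using k(2) pe_iff[OF ij(1)] by auto
  note M = lam_mem[OF x k(1), of _ v]
  have Dk: "rk n x p < int k" if p: "p \<in> Dset n (is_up v) i j" for p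
  proof -
    have pV: "p \<in> pm_set n" using p by (simp add: Dset_def)
    from p consider "i < p" "p < j" "\<not> is_up v p" | "p = i \<or> p = j" "is_up v p" by (auto simp: Dset_def)
    then show ?thesis
    proof cases
      case 1 then have "p \<notin> lam_path n v x k" using h(3) by blast
      then show ?thesis using M[of p] pV 1 by auto
    next
      case 2 then have "p \<in> lam_path n v x k" using h by blast
      then show ?thesis using M[of p] pV 2 by (auto simp: pm_set_iff)
    qed
  qed
  have Uk: "\<not> rk n x q < int k" if q: "q \<in> Uset n (is_up v) i j" for q
  proof -
    have qV: "q \<in> pm_set n" using q by (simp add: Uset_def)
    from q consider "i < q" "q < j" "is_up v q" | "q = i \<or> q = j" "\<not> is_up v q" by (auto simp: Uset_def)
    then show ?thesis
    proof cases
      case 1 then have "q \<notin> lam_path n v x k" using h(3) by blast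
      then show ?thesis using M[of q] qV 1 by auto
    next
      case 2 then have "q \<in> lam_path n v x k" using h by blast
      then show ?thesis using M[of q] qV 2 by (auto simp: pm_set_iff)
    qed
  qed
  show "Erel n (is_up v) i j (Inv n x)" unfolding Erel_def
  proof (intro ballI)
    fix p q assume p: "p \<in> Dset n (is_up v) i j" and q: "q \<in> Uset n (is_up v) i j"
    have pqV: "p \<in> pm_set n" "q \<in> pm_set n" using p q by (auto simp: Dset_def Uset_def)
    have "rk n x p < rk n x q" using Dk[OF p] Uk[OF q] by simp
    then have "inv x p < inv x q" using rk_mono[OF x pqV] by simp
    moreover then have "p \<noteq> q" by auto
    ultimately show "befR (Inv n x) p q" using befR_Inv[OF x pqV] by simp
  qed
next
  assume E: "Erel n (is_up v) i j (Inv n x)"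
  define D where "D = Dset n (is_up v) i j"
  define U where "U = Uset n (is_up v) i j"
  have finD: "finite D" using finite_pm_set by (simp add: D_def Dset_def)
  define k where "k = (if D = {} then 0 else nat (Max (rk n x ` D) + 1))"
  have DV: "D \<subseteq> pm_set n" "U \<subseteq> pm_set n" by (auto simp: D_def U_def Dset_def Uset_def)
  have Dk: "rk n x p < int k" if "p \<in> D" for p
  proof -
    have "rk n x p \<le> Max (rk n x ` D)" using that finD by simp
    moreover have "0 \<le> rk n x p" using rk_range[OF x] DV that by blast
    ultimately show ?thesis using that by (auto simp: k_def)
  qed
  have Uk: "int k \<le> rk n x q" if q: "q \<in> U" for q
  proof (cases "D = {}")
    case True then show ?thesis using rk_range[OF x] DV q by (auto simp: k_def)
  next
    case False
    have "rk n x p < rk n x q" if p: "p \<in> D" for p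
    proof -
      have "befR (Inv n x) p q" using E p q by (auto simp: Erel_def D_def U_def)
      moreover have "p \<noteq> q" using p q by (auto simp: D_def U_def Dset_def Uset_def)
      ultimately have "inv x p < inv x q" using befR_Inv[OF x] DV p q by blast
      then show ?thesis using rk_mono[OF x] DV p q by blast
    qed
    then have "Max (rk n x ` D) < rk n x q" using False finD by simp
    moreover have "0 \<le> Max (rk n x ` D)" using False finD rk_range[OF x] DV
      by (meson Max_ge_iff ex_in_conv finite_imageI image_eqI image_is_empty subsetD)
    ultimately show ?thesis using False by (simp add: k_def)
  qed
  have k2: "k \<le> 2 * n"
  proof (cases "D = {}")
    case True then show ?thesis by (simp add: k_def)
  next
    case False
    then obtain p where p: "p \<in> D" "rk n x p = Max (rk n x ` D)" using finD
      by (metis (mono_tags, lifting) Max_in empty_is_image finite_imageI imageE)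
    then show ?thesis using rk_range[OF x] DV False by (force simp: k_def)
  qed
  note M = lam_mem[OF x k2, of _ v]
  have iin: "i \<in> lam_path n v x k"
  proof (cases "i \<in> pm_set n")
    case True
    show ?thesis
    proof (cases "is_up v i")
      case True then have "i \<in> D" using \<open>i \<in> pm_set n\<close> by (simp add: D_def Dset_def)
      then show ?thesis using M[of i] Dk True \<open>i \<in> pm_set n\<close> by auto
    next
      case False then have "i \<in> U" using \<open>i \<in> pm_set n\<close> by (simp add: U_def Uset_def)
      then show ?thesis using M[of i] Uk False \<open>i \<in> pm_set n\<close> by force
    qed
  next
    case False then show ?thesis using M[of i] ij by (auto simp: pm_set_iff)
  qed
  have jin: "j \<in> lam_path n v x k"
  proof (cases "j \<in> pm_set n")
    case True
    show ?thesis
    proof (cases "is_up v j")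
      case True then have "j \<in> D" using \<open>j \<in> pm_set n\<close> by (simp add: D_def Dset_def)
      then show ?thesis using M[of j] Dk True \<open>j \<in> pm_set n\<close> by auto
    next
      case False then have "j \<in> U" using \<open>j \<in> pm_set n\<close> by (simp add: U_def Uset_def)
      then show ?thesis using M[of j] Uk False \<open>j \<in> pm_set n\<close> by force
    qed
  next
    case False then show ?thesis using M[of j] ij by (auto simp: pm_set_iff)
  qed
  have btw: "\<not> (i < l \<and> l < j)" if l: "l \<in> lam_path n v x k" for l
  proof
    assume il: "i < l \<and> l < j"
    have "l \<noteq> - int n - 1" "l \<noteq> int n + 1" using il ij by (auto simp: pm_set_iff)
    then have lV: "l \<in> pm_set n" and lu: "is_up v l \<longleftrightarrow> rk n x l < int k" using M[of l] l by auto
    show False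
    proof (cases "is_up v l")
      case True then have "l \<in> U" using lV il by (simp add: U_def Uset_def)
      then show False using Uk lu True by force
    next
      case False then have "l \<in> D" using lV il by (simp add: D_def Dset_def)
      then show False using Dk lu False by force
    qed
  qed
  have "{i, j} \<in> path_edges (lam_path n v x k)" using pe_iff[OF ij(1)] iin jin btw by blast
  then show "\<exists>k \<le> 2 * n. {i, j} \<in> path_edges (lam_path n v x k)" using k2 by blast
qed


lemma lam_sub:
  assumes x: "x \<in> signed_perms n" and k: "k \<le> 2 * n"
  shows "lam_path n v x k \<subseteq> pm_set (Suc n)"
  using lam_mem[OF x k, of _ v] by (auto simp: pm_set_iff)

lemma etaB_char:
  assumes x: "x \<in> signed_perms n"
  shows "etaB n v x = {d. is_diagonal n v d \<and> (\<exists>i j. d = {i, j} \<and> i < j \<and> i \<in> pm_set (Suc n) \<and>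
     j \<in> pm_set (Suc n) \<and> Erel n (is_up v) i j (Inv n x))}"
proof (intro set_eqI iffI)
  fix d assume "d \<in> etaB n v x"
  then obtain k where dk: "is_diagonal n v d" "k \<le> 2 * n" "d \<in> path_edges (lam_path n v x k)"
    by (auto simp: etaB_def)
  then obtain i j where ij: "d = {i, j}" "i \<in> lam_path n v x k" "j \<in> lam_path n v x k" "i < j"
    by (auto simp: path_edges_def)
  have V: "i \<in> pm_set (Suc n)" "j \<in> pm_set (Suc n)" using lam_sub[OF x dk(2)] ij by auto
  have "Erel n (is_up v) i j (Inv n x)" using edge_iff[OF x ij(4) V, of v] dk ij by blast
  then show "d \<in> {d. is_diagonal n v d \<and> (\<exists>i j. d = {i, j} \<and> i < j \<and> i \<in> pm_set (Suc n) \<and>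
     j \<in> pm_set (Suc n) \<and> Erel n (is_up v) i j (Inv n x))}" using dk(1) ij V by blast
next
  fix d assume "d \<in> {d. is_diagonal n v d \<and> (\<exists>i j. d = {i, j} \<and> i < j \<and> i \<in> pm_set (Suc n) \<and>
     j \<in> pm_set (Suc n) \<and> Erel n (is_up v) i j (Inv n x))}"
  then obtain i j where h: "is_diagonal n v d" "d = {i, j}" "i < j" "i \<in> pm_set (Suc n)"
     "j \<in> pm_set (Suc n)" "Erel n (is_up v) i j (Inv n x)" by blast
  then show "d \<in> etaB n v x" using edge_iff[OF x h(3-5), of v] by (auto simp: etaB_def)
qed

lemma etaB_Theta:
  assumes x: "x \<in> signed_perms n" and y: "y \<in> signed_perms n"
  shows "etaB n v x = etaB n v y \<longleftrightarrow> ThetaR n (is_up v) (is_diagonal n v) x y"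
proof
  assume e: "etaB n v x = etaB n v y"
  show "ThetaR n (is_up v) (is_diagonal n v) x y" unfolding ThetaR_def
  proof (intro allI impI)
    fix i j assume ij: "i < j" "i \<in> pm_set (Suc n)" "j \<in> pm_set (Suc n)" "is_diagonal n v {i, j}"
    have k: "Erel n (is_up v) i j (Inv n z) \<longleftrightarrow> {i, j} \<in> etaB n v z" if z: "z \<in> signed_perms n" for z
    proof
      assume "Erel n (is_up v) i j (Inv n z)"
      then show "{i, j} \<in> etaB n v z" using etaB_char[OF z, of v] ij by blast
    next
      assume "{i, j} \<in> etaB n v z"
      then obtain i' j' where h: "{i, j} = {i', j'}" "i' < j'" "Erel n (is_up v) i' j' (Inv n z)"
        using etaB_char[OF z, of v] by blast
      then have "i = i' \<and> j = j'" using ij(1) by (auto simp: doubleton_eq_iff)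
      then show "Erel n (is_up v) i j (Inv n z)" using h by simp
    qed
    show "Erel n (is_up v) i j (Inv n x) \<longleftrightarrow> Erel n (is_up v) i j (Inv n y)"
      using k[OF x] k[OF y] e by simp
  qed
next
  assume Th: "ThetaR n (is_up v) (is_diagonal n v) x y"
  show "etaB n v x = etaB n v y"
    unfolding etaB_char[OF x] etaB_char[OF y]
    using Th unfolding ThetaR_def by blast
qed


section \<open>Duality and the generic congruence theorem\<close>

lemma Dset_neg: "Dset n (\<lambda>u. \<not> lab u) i j = Uset n lab i j"
  by (auto simp: Dset_def Uset_def)

lemma Uset_neg: "Uset n (\<lambda>u. \<not> lab u) i j = Dset n lab i j"
  by (auto simp: Dset_def Uset_def)

lemma Erel_nx:
  assumes x: "x \<in> signed_perms n"
  shows "Erel n (\<lambda>u. \<not> lab u) i j (Inv n (nx n x)) \<longleftrightarrow> Erel n lab i j (Inv n x)"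
proof -
  have b: "befR (Inv n (nx n x)) p q \<longleftrightarrow> befR (Inv n x) q p"
    if "p \<in> pm_set n" "q \<in> pm_set n" "p \<noteq> q" for p q
    using befR_Inv[OF nx_sp[OF x] that] befR_Inv[OF x that(2,1)] that(3) inv_nx[OF x that(1)] inv_nx[OF x that(2)]
    by auto
  have "Erel n (\<lambda>u. \<not> lab u) i j (Inv n (nx n x)) \<longleftrightarrow>
      (\<forall>p \<in> Uset n lab i j. \<forall>q \<in> Dset n lab i j. befR (Inv n (nx n x)) p q)"
    by (simp add: Erel_def Dset_neg Uset_neg)
  also have "\<dots> \<longleftrightarrow> (\<forall>p \<in> Uset n lab i j. \<forall>q \<in> Dset n lab i j. befR (Inv n x) q p)"
  proof -
    have "p \<in> Uset n lab i j \<Longrightarrow> q \<in> Dset n lab i j \<Longrightarrow> befR (Inv n (nx n x)) p q \<longleftrightarrow> befR (Inv n x) q p" for p q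
      using b[of p q] by (auto simp: Dset_def Uset_def)
    then show ?thesis by blast
  qed
  also have "\<dots> \<longleftrightarrow> Erel n lab i j (Inv n x)" by (auto simp: Erel_def)
  finally show ?thesis .
qed

lemma ThetaR_nx:
  assumes x: "x \<in> signed_perms n" and y: "y \<in> signed_perms n"
  shows "ThetaR n (\<lambda>u. \<not> lab u) diag (nx n x) (nx n y) \<longleftrightarrow> ThetaR n lab diag x y"
  using Erel_nx[OF x] Erel_nx[OF y] by (simp add: ThetaR_def)

theorem cong_gen:
  assumes labs: "\<And>u. u \<in> pm_set n \<Longrightarrow> lab (- u) = (\<not> lab u)"
    and Hd: "\<And>i j. i < j \<Longrightarrow> i \<in> pm_set (Suc n) \<Longrightarrow> j \<in> pm_set (Suc n) \<Longrightarrow>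
       Dset n lab i j \<noteq> {} \<Longrightarrow> Uset n lab i j \<noteq> {} \<Longrightarrow> diag {i, j}"
  shows "lattice_congruence (signed_perms n) (weak_le n)
     {(x, y). x \<in> signed_perms n \<and> y \<in> signed_perms n \<and> ThetaR n lab diag x y}"
proof -
  define Th where "Th = {(x, y). x \<in> signed_perms n \<and> y \<in> signed_perms n \<and> ThetaR n lab diag x y}"
  have eq: "equiv (signed_perms n) Th"
    unfolding equiv_def refl_on_def sym_def trans_def Th_def ThetaR_def by auto
  have labs': "\<And>u. u \<in> pm_set n \<Longrightarrow> (\<not> lab (- u)) = (\<not> \<not> lab u)" using labs by simp
  have Hd': "\<And>i j. i < j \<Longrightarrow> i \<in> pm_set (Suc n) \<Longrightarrow> j \<in> pm_set (Suc n) \<Longrightarrow>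
       Dset n (\<lambda>u. \<not> lab u) i j \<noteq> {} \<Longrightarrow> Uset n (\<lambda>u. \<not> lab u) i j \<noteq> {} \<Longrightarrow> diag {i, j}"
    using Hd by (simp add: Dset_neg Uset_neg)
  have meet: "(m1, m2) \<in> Th"
    if h: "(x, y) \<in> Th" "z \<in> signed_perms n" "is_meet (signed_perms n) (weak_le n) x z m1"
      "is_meet (signed_perms n) (weak_le n) y z m2" for x y z m1 m2
  proof -
    have xy: "x \<in> signed_perms n" "y \<in> signed_perms n" "ThetaR n lab diag x y" using h(1) by (auto simp: Th_def)
    have m: "m1 \<in> signed_perms n" "m2 \<in> signed_perms n" using h(3,4) by (auto simp: is_meet_def)
    have j1: "is_join (signed_perms n) (weak_le n) (nx n x) (nx n z) (nx n m1)" using meet_join[OF xy(1) h(2) h(3)] .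
    have j2: "is_join (signed_perms n) (weak_le n) (nx n y) (nx n z) (nx n m2)" using meet_join[OF xy(2) h(2) h(4)] .
    have "ThetaR n (\<lambda>u. \<not> lab u) diag (nx n x) (nx n y)" using ThetaR_nx[OF xy(1,2)] xy(3) by simp
    then have "ThetaR n (\<lambda>u. \<not> lab u) diag (nx n m1) (nx n m2)"
      using join_compat[where lab="\<lambda>u. \<not> lab u" and diag=diag, OF labs' Hd' nx_sp[OF xy(1)] nx_sp[OF xy(2)] nx_sp[OF h(2)] _ j1 j2] by blast
    then have "ThetaR n lab diag m1 m2" using ThetaR_nx[OF m] by simp
    then show ?thesis using m by (simp add: Th_def)
  qed
  have join: "(m1, m2) \<in> Th"
    if h: "(x, y) \<in> Th" "z \<in> signed_perms n" "is_join (signed_perms n) (weak_le n) x z m1"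
      "is_join (signed_perms n) (weak_le n) y z m2" for x y z m1 m2
  proof -
    have xy: "x \<in> signed_perms n" "y \<in> signed_perms n" "ThetaR n lab diag x y" using h(1) by (auto simp: Th_def)
    have m: "m1 \<in> signed_perms n" "m2 \<in> signed_perms n" using h(3,4) by (auto simp: is_join_def)
    have "ThetaR n lab diag m1 m2" using join_compat[OF labs Hd xy(1,2) h(2) xy(3) h(3,4)] .
    then show ?thesis using m by (simp add: Th_def)
  qed
  show ?thesis unfolding lattice_congruence_def Th_def[symmetric] using eq meet join by blast
qed


section \<open>Geometry of the polygon\<close>

lemma cross3_cyc: "cross3 a b c = cross3 c a b"
  by (simp add: cross3_def algebra_simps)

lemma cross3_swap: "cross3 a c b = - cross3 a b c"
  by (simp add: cross3_def algebra_simps)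

context
  fixes n :: nat and v :: "int \<Rightarrow> real \<times> real"
  assumes P: "sym_polygon n v"
begin

lemma P_hull: "i \<in> pm_set (Suc n) \<Longrightarrow> v i \<notin> convex hull (v ` (pm_set (Suc n) - {i}))"
  using P by (simp add: sym_polygon_def)

lemma P_sym: "i \<in> pm_set (Suc n) \<Longrightarrow> v (- i) = - v i"
  using P by (simp add: sym_polygon_def)

lemma P_x: "i \<in> pm_set (Suc n) \<Longrightarrow> j \<in> pm_set (Suc n) \<Longrightarrow> i < j \<Longrightarrow> fst (v i) < fst (v j)"
  using P by (simp add: sym_polygon_def)

lemma P_E2: "snd (v (int n + 1)) = 0"
  using P by (simp add: sym_polygon_def)

lemma ends_in: "- int n - 1 \<in> pm_set (Suc n)" "int n + 1 \<in> pm_set (Suc n)"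
  by (auto simp: pm_set_iff)

lemma P_E1: "snd (v (- int n - 1)) = 0"
proof -
  have "v (- (int n + 1)) = - v (int n + 1)" using P_sym ends_in(2) by blast
  then show ?thesis using P_E2 by simp
qed

lemma hull_contra:
  assumes l: "l \<in> pm_set n" and ij: "i \<in> pm_set (Suc n)" "j \<in> pm_set (Suc n)" "i \<noteq> l" "j \<noteq> l"
    and m: "0 \<le> \<mu>" "\<mu> \<le> 1" and t: "0 \<le> t" "t \<le> 1" and s: "0 \<le> s" "s \<le> 1"
    and eq: "v l = \<mu> *\<^sub>R ((1 - t) *\<^sub>R v i + t *\<^sub>R v j) + (1 - \<mu>) *\<^sub>R ((1 - s) *\<^sub>R v (- int n - 1) + s *\<^sub>R v (int n + 1))"
  shows False
proof -
  define H where "H = convex hull (v ` (pm_set (Suc n) - {l}))"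
  have lR: "l \<in> pm_set (Suc n)" using l by (auto simp: pm_set_iff)
  have cv: "convex H" by (simp add: H_def)
  have sub: "v ` (pm_set (Suc n) - {l}) \<subseteq> H" unfolding H_def by (rule hull_subset)
  have e1: "- int n - 1 \<noteq> l" "int n + 1 \<noteq> l" using l by (auto simp: pm_set_iff)
  have pts: "v i \<in> H" "v j \<in> H" "v (- int n - 1) \<in> H" "v (int n + 1) \<in> H"
    using sub ij e1 ends_in by auto
  have S: "(1 - t) *\<^sub>R v i + t *\<^sub>R v j \<in> H" using convexD[OF cv pts(1,2)] t by simp
  have R: "(1 - s) *\<^sub>R v (- int n - 1) + s *\<^sub>R v (int n + 1) \<in> H" using convexD[OF cv pts(3,4)] s by simp
  have "v l \<in> H" using convexD[OF cv S R] m eq by simp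
  then show False using P_hull[OF lR] by (simp add: H_def)
qed

lemma x_between:
  assumes "i \<in> pm_set (Suc n)" "j \<in> pm_set (Suc n)" "l \<in> pm_set n" "i < l" "l < j"
  shows "fst (v i) < fst (v l)" "fst (v l) < fst (v j)"
    "fst (v (- int n - 1)) < fst (v l)" "fst (v l) < fst (v (int n + 1))"
proof -
  have lR: "l \<in> pm_set (Suc n)" using assms(3) by (auto simp: pm_set_iff)
  show "fst (v i) < fst (v l)" "fst (v l) < fst (v j)" using P_x assms lR by auto
  have "- int n - 1 < l" "l < int n + 1" using assms(3) by (auto simp: pm_set_iff)
  then show "fst (v (- int n - 1)) < fst (v l)" "fst (v l) < fst (v (int n + 1))"
    using P_x lR ends_in by auto
qed

lemma main_geo:
  assumes ij: "i \<in> pm_set (Suc n)" "j \<in> pm_set (Suc n)" and l: "l \<in> pm_set n" and il: "i < l" "l < j"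
    and cond: "0 < snd (v l) / (snd (v i) + (fst (v l) - fst (v i)) / (fst (v j) - fst (v i)) * (snd (v j) - snd (v i)))"
      "snd (v l) / (snd (v i) + (fst (v l) - fst (v i)) / (fst (v j) - fst (v i)) * (snd (v j) - snd (v i))) \<le> 1"
  shows False
proof -
  note xb = x_between[OF ij l il]
  define xA where "xA = fst (v i)"
  define xB where "xB = fst (v j)"
  define xC where "xC = fst (v l)"
  define yA where "yA = snd (v i)"
  define yB where "yB = snd (v j)"
  define yC where "yC = snd (v l)"
  define x1 where "x1 = fst (v (- int n - 1))"
  define x2 where "x2 = fst (v (int n + 1))"
  define t where "t = (xC - xA) / (xB - xA)"
  define yS where "yS = yA + t * (yB - yA)"
  define \<mu> where "\<mu> = yC / yS"
  define s where "s = (xC - x1) / (x2 - x1)"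
  have lt: "xA < xC" "xC < xB" "x1 < xC" "xC < x2" using xb by (auto simp: xA_def xB_def xC_def x1_def x2_def)
  have t01: "0 \<le> t" "t \<le> 1" using lt by (auto simp: t_def divide_simps)
  have s01: "0 \<le> s" "s \<le> 1" using lt by (auto simp: s_def divide_simps)
  have m01: "0 \<le> \<mu>" "\<mu> \<le> 1" using cond by (auto simp: \<mu>_def yS_def t_def xA_def xB_def xC_def yA_def yB_def yC_def)
  have yS0: "yS \<noteq> 0" using cond(1) by (auto simp: yS_def t_def xA_def xB_def xC_def yA_def yB_def yC_def)
  have fS: "xA + t * (xB - xA) = xC" using lt by (simp add: t_def)
  have fR: "x1 + s * (x2 - x1) = xC" using lt by (simp add: s_def)
  have e0: "snd (v (- int n - 1)) = 0" "snd (v (int n + 1)) = 0" using P_E1 P_E2 by auto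
  have "v l = \<mu> *\<^sub>R ((1 - t) *\<^sub>R v i + t *\<^sub>R v j) + (1 - \<mu>) *\<^sub>R ((1 - s) *\<^sub>R v (- int n - 1) + s *\<^sub>R v (int n + 1))"
  proof (rule prod_eqI)
    have "fst (\<mu> *\<^sub>R ((1 - t) *\<^sub>R v i + t *\<^sub>R v j) + (1 - \<mu>) *\<^sub>R ((1 - s) *\<^sub>R v (- int n - 1) + s *\<^sub>R v (int n + 1)))
       = \<mu> * (xA + t * (xB - xA)) + (1 - \<mu>) * (x1 + s * (x2 - x1))"
      by (simp add: xA_def xB_def x1_def x2_def algebra_simps)
    also have "\<dots> = xC" using fS fR by (simp add: algebra_simps)
    finally show "fst (v l) = fst (\<mu> *\<^sub>R ((1 - t) *\<^sub>R v i + t *\<^sub>R v j) + (1 - \<mu>) *\<^sub>R ((1 - s) *\<^sub>R v (- int n - 1) + s *\<^sub>R v (int n + 1)))"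
      by (simp add: xC_def)
  next
    have "snd (\<mu> *\<^sub>R ((1 - t) *\<^sub>R v i + t *\<^sub>R v j) + (1 - \<mu>) *\<^sub>R ((1 - s) *\<^sub>R v (- int n - 1) + s *\<^sub>R v (int n + 1)))
       = \<mu> * yS"
      using e0 by (simp add: yA_def yB_def yS_def algebra_simps)
    also have "\<dots> = yC" using yS0 by (simp add: \<mu>_def)
    finally show "snd (v l) = snd (\<mu> *\<^sub>R ((1 - t) *\<^sub>R v i + t *\<^sub>R v j) + (1 - \<mu>) *\<^sub>R ((1 - s) *\<^sub>R v (- int n - 1) + s *\<^sub>R v (int n + 1)))"
      by (simp add: yC_def)
  qed
  moreover have "i \<noteq> l" "j \<noteq> l" using il by auto
  ultimately show False using hull_contra[OF l ij _ _ m01 t01 s01] by blast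
qed


lemma y_nonzero:
  assumes l: "l \<in> pm_set n"
  shows "snd (v l) \<noteq> 0"
proof
  assume y0: "snd (v l) = 0"
  have lR: "l \<in> pm_set (Suc n)" using l by (auto simp: pm_set_iff)
  have "- int n - 1 < l" "l < int n + 1" using l by (auto simp: pm_set_iff)
  then have lt: "fst (v (- int n - 1)) < fst (v l)" "fst (v l) < fst (v (int n + 1))"
    using P_x lR ends_in by auto
  define s where "s = (fst (v l) - fst (v (- int n - 1))) / (fst (v (int n + 1)) - fst (v (- int n - 1)))"
  have s01: "0 \<le> s" "s \<le> 1" using lt by (auto simp: s_def divide_simps)
  have e0: "snd (v (- int n - 1)) = 0" "snd (v (int n + 1)) = 0" using P_E1 P_E2 by auto
  have "v l = 0 *\<^sub>R ((1 - 0) *\<^sub>R v (- int n - 1) + 0 *\<^sub>R v (- int n - 1)) + (1 - 0) *\<^sub>R ((1 - s) *\<^sub>R v (- int n - 1) + s *\<^sub>R v (int n + 1))"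
  proof (rule prod_eqI)
    have fR: "fst (v (- int n - 1)) + s * (fst (v (int n + 1)) - fst (v (- int n - 1))) = fst (v l)"
      using lt by (simp add: s_def)
    have "fst (0 *\<^sub>R ((1 - 0) *\<^sub>R v (- int n - 1) + 0 *\<^sub>R v (- int n - 1)) + (1 - 0) *\<^sub>R ((1 - s) *\<^sub>R v (- int n - 1) + s *\<^sub>R v (int n + 1)))
       = fst (v (- int n - 1)) + s * (fst (v (int n + 1)) - fst (v (- int n - 1)))"
      by (simp add: algebra_simps)
    then show "fst (v l) = fst (0 *\<^sub>R ((1 - 0) *\<^sub>R v (- int n - 1) + 0 *\<^sub>R v (- int n - 1)) + (1 - 0) *\<^sub>R ((1 - s) *\<^sub>R v (- int n - 1) + s *\<^sub>R v (int n + 1)))"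
      using fR by simp
    show "snd (v l) = snd (0 *\<^sub>R ((1 - 0) *\<^sub>R v (- int n - 1) + 0 *\<^sub>R v (- int n - 1)) + (1 - 0) *\<^sub>R ((1 - s) *\<^sub>R v (- int n - 1) + s *\<^sub>R v (int n + 1)))"
      using y0 e0 by simp
  qed
  moreover have "- int n - 1 \<noteq> l" using l by (auto simp: pm_set_iff)
  ultimately show False using hull_contra[OF l ends_in(1) ends_in(1), of 0 0 s] s01 by simp
qed

lemma sign_up:
  assumes ij: "i \<in> pm_set (Suc n)" "j \<in> pm_set (Suc n)" and l: "l \<in> pm_set n" and il: "i < l" "l < j"
    and up: "is_up v l"
  shows "cross3 (v i) (v j) (v l) > 0"
proof (rule ccontr)
  assume "\<not> cross3 (v i) (v j) (v l) > 0"
  then have c: "(fst (v j) - fst (v i)) * (snd (v l) - snd (v i)) \<le> (snd (v j) - snd (v i)) * (fst (v l) - fst (v i))"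
    by (simp add: cross3_def)
  note xb = x_between[OF ij l il]
  have d: "fst (v j) - fst (v i) > 0" using xb by simp
  have "snd (v l) - snd (v i) \<le> (snd (v j) - snd (v i)) * (fst (v l) - fst (v i)) / (fst (v j) - fst (v i))"
    using c d by (simp add: pos_le_divide_eq mult.commute)
  then have le: "snd (v l) \<le> snd (v i) + (fst (v l) - fst (v i)) / (fst (v j) - fst (v i)) * (snd (v j) - snd (v i))"
    by (simp add: algebra_simps)
  have pos: "snd (v l) > 0" using up by (simp add: is_up_def)
  show False
    by (rule main_geo[OF ij l il]) (use le pos in \<open>auto simp: divide_simps\<close>)
qed

lemma sign_down:
  assumes ij: "i \<in> pm_set (Suc n)" "j \<in> pm_set (Suc n)" and l: "l \<in> pm_set n" and il: "i < l" "l < j"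
    and up: "\<not> is_up v l"
  shows "cross3 (v i) (v j) (v l) < 0"
proof (rule ccontr)
  assume "\<not> cross3 (v i) (v j) (v l) < 0"
  then have c: "(snd (v j) - snd (v i)) * (fst (v l) - fst (v i)) \<le> (fst (v j) - fst (v i)) * (snd (v l) - snd (v i))"
    by (simp add: cross3_def)
  note xb = x_between[OF ij l il]
  have d: "fst (v j) - fst (v i) > 0" using xb by simp
  have "(snd (v j) - snd (v i)) * (fst (v l) - fst (v i)) / (fst (v j) - fst (v i)) \<le> snd (v l) - snd (v i)"
    using c d by (simp add: pos_divide_le_eq mult.commute)
  then have le: "snd (v i) + (fst (v l) - fst (v i)) / (fst (v j) - fst (v i)) * (snd (v j) - snd (v i)) \<le> snd (v l)"
    by (simp add: algebra_simps)
  have neg: "snd (v l) < 0" using up y_nonzero[OF l] by (simp add: is_up_def)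
  show False
    by (rule main_geo[OF ij l il]) (use le neg in \<open>auto simp: divide_simps\<close>)
qed

lemma labs_up: "u \<in> pm_set n \<Longrightarrow> is_up v (- u) = (\<not> is_up v u)"
proof -
  assume u: "u \<in> pm_set n"
  have uR: "u \<in> pm_set (Suc n)" using u by (auto simp: pm_set_iff)
  have "v (- u) = - v u" using P_sym[OF uR] .
  then show ?thesis using y_nonzero[OF u] by (auto simp: is_up_def)
qed


lemma neg_exists:
  assumes ij: "i < j" "i \<in> pm_set (Suc n)" "j \<in> pm_set (Suc n)" and D: "p \<in> Dset n (is_up v) i j"
  shows "\<exists>k \<in> pm_set (Suc n) - {i, j}. cross3 (v i) (v j) (v k) < 0"
proof -
  have pV: "p \<in> pm_set n" using D by (simp add: Dset_def)
  from D consider "i < p" "p < j" "\<not> is_up v p" | "p = i" "is_up v p" | "p = j" "is_up v p"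
    by (auto simp: Dset_def)
  then show ?thesis
  proof cases
    case 1
    have "p \<in> pm_set (Suc n)" using pV by (auto simp: pm_set_iff)
    then show ?thesis using sign_down[OF ij(2,3) pV 1] 1 by auto
  next
    case 2
    have "- int n - 1 < i" using pV 2 by (auto simp: pm_set_iff)
    then have "cross3 (v (- int n - 1)) (v j) (v i) > 0" using sign_up[OF ends_in(1) ij(3) pV] 2 ij by simp
    then have "cross3 (v i) (v j) (v (- int n - 1)) < 0"
      using cross3_cyc[of "v i" "v j" "v (- int n - 1)"] cross3_swap[of "v (- int n - 1)" "v j" "v i"] by simp
    moreover have "- int n - 1 \<noteq> i" "- int n - 1 \<noteq> j" using \<open>- int n - 1 < i\<close> ij by auto
    ultimately show ?thesis using ends_in(1) by blast
  next
    case 3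
    have "j < int n + 1" using pV 3 by (auto simp: pm_set_iff)
    then have "cross3 (v i) (v (int n + 1)) (v j) > 0" using sign_up[OF ij(2) ends_in(2) pV] 3 ij by simp
    then have "cross3 (v i) (v j) (v (int n + 1)) < 0" using cross3_swap[of "v i" "v j" "v (int n + 1)"] by simp
    moreover have "int n + 1 \<noteq> i" "int n + 1 \<noteq> j" using \<open>j < int n + 1\<close> ij by auto
    ultimately show ?thesis using ends_in(2) by blast
  qed
qed

lemma pos_exists:
  assumes ij: "i < j" "i \<in> pm_set (Suc n)" "j \<in> pm_set (Suc n)" and U: "p \<in> Uset n (is_up v) i j"
  shows "\<exists>k \<in> pm_set (Suc n) - {i, j}. cross3 (v i) (v j) (v k) > 0"
proof -
  have pV: "p \<in> pm_set n" using U by (simp add: Uset_def)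
  from U consider "i < p" "p < j" "is_up v p" | "p = i" "\<not> is_up v p" | "p = j" "\<not> is_up v p"
    by (auto simp: Uset_def)
  then show ?thesis
  proof cases
    case 1
    have "p \<in> pm_set (Suc n)" using pV by (auto simp: pm_set_iff)
    then show ?thesis using sign_up[OF ij(2,3) pV 1] 1 by auto
  next
    case 2
    have "- int n - 1 < i" using pV 2 by (auto simp: pm_set_iff)
    then have "cross3 (v (- int n - 1)) (v j) (v i) < 0" using sign_down[OF ends_in(1) ij(3) pV] 2 ij by simp
    then have "cross3 (v i) (v j) (v (- int n - 1)) > 0"
      using cross3_cyc[of "v i" "v j" "v (- int n - 1)"] cross3_swap[of "v (- int n - 1)" "v j" "v i"] by simp
    moreover have "- int n - 1 \<noteq> i" "- int n - 1 \<noteq> j" using \<open>- int n - 1 < i\<close> ij by auto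
    ultimately show ?thesis using ends_in(1) by blast
  next
    case 3
    have "j < int n + 1" using pV 3 by (auto simp: pm_set_iff)
    then have "cross3 (v i) (v (int n + 1)) (v j) < 0" using sign_down[OF ij(2) ends_in(2) pV] 3 ij by simp
    then have "cross3 (v i) (v j) (v (int n + 1)) > 0" using cross3_swap[of "v i" "v j" "v (int n + 1)"] by simp
    moreover have "int n + 1 \<noteq> i" "int n + 1 \<noteq> j" using \<open>j < int n + 1\<close> ij by auto
    ultimately show ?thesis using ends_in(2) by blast
  qed
qed

lemma Hd_geo:
  assumes ij: "i < j" "i \<in> pm_set (Suc n)" "j \<in> pm_set (Suc n)"
    and D: "Dset n (is_up v) i j \<noteq> {}" and U: "Uset n (is_up v) i j \<noteq> {}"
  shows "is_diagonal n v {i, j}"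
proof -
  obtain p q where p: "p \<in> Dset n (is_up v) i j" and q: "q \<in> Uset n (is_up v) i j" using D U by blast
  obtain k1 where k1: "k1 \<in> pm_set (Suc n) - {i, j}" "cross3 (v i) (v j) (v k1) < 0" using neg_exists[OF ij p] by blast
  obtain k2 where k2: "k2 \<in> pm_set (Suc n) - {i, j}" "cross3 (v i) (v j) (v k2) > 0" using pos_exists[OF ij q] by blast
  have "\<not> poly_edge n v i j"
  proof
    assume "poly_edge n v i j"
    then have "(\<forall>k \<in> pm_set (Suc n) - {i, j}. cross3 (v i) (v j) (v k) > 0) \<or>
      (\<forall>k \<in> pm_set (Suc n) - {i, j}. cross3 (v i) (v j) (v k) < 0)" by (simp add: poly_edge_def)
    then show False using k1 k2 by force
  qed
  then show ?thesis using ij unfolding is_diagonal_def by force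
qed

end


theorem theorem7p1:
  fixes n :: nat and v :: "int \<Rightarrow> real \<times> real"
  assumes "sym_polygon n v"
  shows "lattice_congruence (signed_perms n) (weak_le n)
           {(x, y). x \<in> signed_perms n \<and> y \<in> signed_perms n \<and> etaB n v x = etaB n v y}"
proof -
  have eq: "{(x, y). x \<in> signed_perms n \<and> y \<in> signed_perms n \<and> etaB n v x = etaB n v y} =
     {(x, y). x \<in> signed_perms n \<and> y \<in> signed_perms n \<and> ThetaR n (is_up v) (is_diagonal n v) x y}"
    using etaB_Theta by blast
  have labs: "\<And>u. u \<in> pm_set n \<Longrightarrow> is_up v (- u) = (\<not> is_up v u)"
    using labs_up[OF assms] by blast
  have Hd: "\<And>i j. i < j \<Longrightarrow> i \<in> pm_set (Suc n) \<Longrightarrow> j \<in> pm_set (Suc n) \<Longrightarrow>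
       Dset n (is_up v) i j \<noteq> {} \<Longrightarrow> Uset n (is_up v) i j \<noteq> {} \<Longrightarrow> is_diagonal n v {i, j}"
    using Hd_geo[OF assms] by blast
  show ?thesis unfolding eq by (rule cong_gen[where lab="is_up v" and diag="is_diagonal n v", OF labs Hd])
qed

end
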